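(* Let $\sigma$ and $\tau$ be matchings and let $n\in\mathbb{N}$ with $n\geq|\sigma|$. Then $$|\mathcal{M}_{n}(\sigma(\tau+|\sigma|))|=|\mathcal{M}_{n}(\sigma)|+\sum_{\ell=|\sigma|}^{n}\sum_{k=0}^{n-\ell}\binom{2\ell+k-1}{k}\binom{2n-2\ell-k}{k}\,k!\,|\mu_{\ell}(\sigma)|\,|\mathcal{M}_{n-\ell-k}(\tau)|.$$
   Context: A matching of order $n$ is a partition of $[2n]=\{1,\dots,2n\}$ into blocks (edges) of size two; it is identified with the unique word $w\in[n]^{2n}$ in which the two vertices of each edge carry the same letter and the letters of edges appear in increasing order of their left (smaller) vertices (e.g. $1212$ is $\{\{1,3\},\{2,4\}\}$). $|\sigma|$ denotes the order (number of edges) of $\sigma$. A matching $\sigma$ of order $k$ is a pattern of $\tau$ (written $\sigma\le\tau$, "$\tau$ contains $\sigma$") if there are $i_1<\dots<i_{2k}$ in $[2|\tau|]$ with $\{i_p,i_q\}\in\tau$ iff $\{p,q\}\in\sigma$; otherwise $\tau$ avoids $\sigma$. $\mathcal{M}_n(S)$ is the set of matchings of order $n$ avoiding every pattern in $S$ ($\mathcal{M}_0(S)$ contains only the empty matching). For matchings $\sigma,\tau$, $\sigma(\tau+|\sigma|)$ is the juxtaposition: the word of $\sigma$ followed by the word of $\tau$ with $|\sigma|$ added to each letter. The rightmost edge of a matching is the edge with the largest right vertex. A matching $\lambda$ minimally contains $\sigma$ if it contains $\sigma$ and the matching obtained from $\lambda$ by deleting its rightmost edge does not contain $\sigma$; $\mu_\ell(\sigma)$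 is the set of matchings of order $\ell$ minimally containing $\sigma$. *)

theory Defs
  imports Main
begin

text \<open>A matching is a finite set of edges (2-element sets of vertices) partitioning
  the vertex set {0, ..., 2|M|-1} (0-based version of [2n]).  Its order is card M.\<close>

definition is_matching :: "nat set set \<Rightarrow> bool" where
  "is_matching M \<longleftrightarrow> finite M \<and> (\<forall>e\<in>M. card e = 2) \<and> \<Union>M = {..<2 * card M}
     \<and> (\<forall>e\<in>M. \<forall>e'\<in>M. e \<noteq> e' \<longrightarrow> e \<inter> e' = {})"

definition contains :: "nat set set \<Rightarrow> nat set set \<Rightarrow> bool" where
  "contains \<tau> \<sigma> \<longleftrightarrow> (\<exists>f. strict_mono_on {..<2 * card \<sigma>} f
      \<and> f ` {..<2 * card \<sigma>} \<subseteq> {..<2 * card \<tau>}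
      \<and> (\<forall>p<2 * card \<sigma>. \<forall>q<2 * card \<sigma>. {f p, f q} \<in> \<tau> \<longleftrightarrow> {p, q} \<in> \<sigma>))"

definition avoiders :: "nat \<Rightarrow> nat set set set \<Rightarrow> nat set set set" where
  "avoiders n S = {M. is_matching M \<and> card M = n \<and> (\<forall>s\<in>S. \<not> contains M s)}"

text \<open>Juxtaposition sigma (tau + |sigma|): shift vertices of tau by 2|sigma|.\<close>
definition juxt :: "nat set set \<Rightarrow> nat set set \<Rightarrow> nat set set" where
  "juxt \<sigma> \<tau> = \<sigma> \<union> (\<lambda>e. (\<lambda>x. x + 2 * card \<sigma>) ` e) ` \<tau>"

definition rightmost_edge :: "nat set set \<Rightarrow> nat set" where
  "rightmost_edge M = (THE e. e \<in> M \<and> 2 * card M - 1 \<in> e)"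

definition delete_rightmost :: "nat set set \<Rightarrow> nat set set" where
  "delete_rightmost M =
     (let e0 = rightmost_edge M; a = Min e0
      in (\<lambda>e. (\<lambda>x. if x < a then x else x - 1) ` e) ` (M - {e0}))"

text \<open>lambda minimally contains sigma (if lambda has no edges, the deletion condition
  is vacuous, since there is no rightmost edge).\<close>
definition minimally_contains :: "nat set set \<Rightarrow> nat set set \<Rightarrow> bool" where
  "minimally_contains L \<sigma> \<longleftrightarrow> contains L \<sigma>
     \<and> (L \<noteq> {} \<longrightarrow> \<not> contains (delete_rightmost L) \<sigma>)"

definition mu :: "nat \<Rightarrow> nat set set \<Rightarrow> nat set set set" where
  "mu l \<sigma> = {M. is_matching M \<and> card M = l \<and> minimally_contains M \<sigma>}"

end

theory Submission
  imports Defs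
begin


definition pm :: "nat set set \<Rightarrow> nat set \<Rightarrow> bool" where
  "pm E V \<longleftrightarrow> (\<forall>e\<in>E. card e = 2) \<and> \<Union>E = V \<and> (\<forall>e\<in>E. \<forall>e'\<in>E. e \<noteq> e' \<longrightarrow> e \<inter> e' = {})"

definition emb_into :: "nat set set \<Rightarrow> nat set set \<Rightarrow> nat set \<Rightarrow> bool" where
  "emb_into \<sigma> M W \<longleftrightarrow> (\<exists>g. strict_mono_on {..<2 * card \<sigma>} g \<and> g ` {..<2 * card \<sigma>} \<subseteq> W
      \<and> (\<forall>p<2 * card \<sigma>. \<forall>q<2 * card \<sigma>. {g p, g q} \<in> M \<longleftrightarrow> {p, q} \<in> \<sigma>))"

lemma contains_emb: "contains M \<sigma> = emb_into \<sigma> M {..<2 * card M}"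
  unfolding contains_def emb_into_def by simp

lemma is_matching_pm: "is_matching M \<longleftrightarrow> finite M \<and> pm M {..<2 * card M}"
  unfolding is_matching_def pm_def by auto

lemma pm_card:
  assumes "pm E V" "finite V"
  shows "finite E" "card V = 2 * card E"
proof -
  have sub: "E \<subseteq> Pow V" using assms unfolding pm_def by auto
  then show fE: "finite E" using assms(2) finite_subset by blast
  have fin: "\<And>e. e \<in> E \<Longrightarrow> finite e" using sub assms(2) finite_subset by blast
  have pw: "pairwise disjnt E" using assms unfolding pm_def pairwise_def disjnt_def by blast
  have "card V = sum card E" using card_Union_disjoint[OF pw fin] assms unfolding pm_def by simp
  also have "\<dots> = sum (\<lambda>_. 2) E" using assms unfolding pm_def by simp
  finally show "card V = 2 * card E" by simp
qed

lemma pm_is_matching: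
  assumes "pm M {..<2 * n}"
  shows "is_matching M" "card M = n"
proof -
  have "card M = n" using pm_card[OF assms] by simp
  then show "is_matching M" "card M = n" using assms pm_card[OF assms] is_matching_pm by auto
qed

lemma pm_image:
  assumes "inj_on h V" "pm E V"
  shows "pm ((\<lambda>e. h ` e) ` E) (h ` V)"
proof -
  have sub: "\<And>e. e \<in> E \<Longrightarrow> e \<subseteq> V" using assms(2) unfolding pm_def by auto
  have "\<forall>e\<in>E. card (h ` e) = 2"
  proof
    fix e assume "e \<in> E"
    then have "card (h ` e) = card e" using card_image inj_on_subset[OF assms(1) sub] by blast
    then show "card (h ` e) = 2" using assms(2) \<open>e \<in> E\<close> unfolding pm_def by simp
  qed
  moreover have "\<Union>((\<lambda>e. h ` e) ` E) = h ` V" using assms(2) unfolding pm_def by auto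
  moreover have "\<forall>e\<in>E. \<forall>e'\<in>E. h ` e \<noteq> h ` e' \<longrightarrow> h ` e \<inter> h ` e' = {}"
  proof (intro ballI impI)
    fix e e' assume "e \<in> E" "e' \<in> E" "h ` e \<noteq> h ` e'"
    then have "e \<noteq> e'" by auto
    then have "e \<inter> e' = {}" using assms(2) \<open>e \<in> E\<close> \<open>e' \<in> E\<close> unfolding pm_def by auto
    then show "h ` e \<inter> h ` e' = {}"
      using inj_on_image_Int[OF assms(1) sub[OF \<open>e \<in> E\<close>] sub[OF \<open>e' \<in> E\<close>]] by simp
  qed
  ultimately show ?thesis unfolding pm_def by blast
qed

lemma card_image_image:
  assumes "inj_on h V" "\<Union>E \<subseteq> V"
  shows "card ((\<lambda>e. h ` e) ` E) = card E"
proof -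
  have "inj_on (\<lambda>e. h ` e) E"
  proof (rule inj_onI)
    fix e e' assume "e \<in> E" "e' \<in> E" "h ` e = h ` e'"
    then have "e \<subseteq> V" "e' \<subseteq> V" using assms(2) by auto
    then show "e = e'" using inj_on_image_eq_iff[OF assms(1)] \<open>h ` e = h ` e'\<close> by blast
  qed
  then show ?thesis by (rule card_image)
qed

lemma pm_Un:
  assumes "pm E1 V1" "pm E2 V2" "V1 \<inter> V2 = {}"
  shows "pm (E1 \<union> E2) (V1 \<union> V2)"
proof -
  have s1: "\<And>e. e \<in> E1 \<Longrightarrow> e \<subseteq> V1" and s2: "\<And>e. e \<in> E2 \<Longrightarrow> e \<subseteq> V2"
    using assms unfolding pm_def by auto
  have "\<forall>e\<in>E1 \<union> E2. \<forall>e'\<in>E1 \<union> E2. e \<noteq> e' \<longrightarrow> e \<inter> e' = {}"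
  proof (intro ballI impI)
    fix e e' assume "e \<in> E1 \<union> E2" "e' \<in> E1 \<union> E2" "e \<noteq> e'"
    then consider "e \<in> E1" "e' \<in> E1" | "e \<in> E2" "e' \<in> E2" | "e \<in> E1" "e' \<in> E2" | "e \<in> E2" "e' \<in> E1"
      by blast
    then show "e \<inter> e' = {}"
    proof cases
      case 1 then show ?thesis using assms(1) \<open>e \<noteq> e'\<close> unfolding pm_def by simp
    next
      case 2 then show ?thesis using assms(2) \<open>e \<noteq> e'\<close> unfolding pm_def by simp
    next
      case 3 then show ?thesis using s1 s2 assms(3) by blast
    next
      case 4 then show ?thesis using s1 s2 assms(3) by blast
    qed
  qed
  moreover have "\<forall>e\<in>E1 \<union> E2. card e = 2" using assms unfolding pm_def by auto
  moreover have "\<Union>(E1 \<union> E2) = V1 \<union> V2" using assms unfolding pm_def by auto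
  ultimately show ?thesis unfolding pm_def by blast
qed

lemma pm_sub:
  assumes "pm E V" "E' \<subseteq> E"
  shows "pm E' (\<Union>E')"
  using assms unfolding pm_def by (simp add: subset_iff)

lemma pm_edge:
  assumes "pm E V" "e \<in> E"
  obtains a b where "e = {a, b}" "a \<noteq> b" "a \<in> V" "b \<in> V"
proof -
  have "card e = 2" "e \<subseteq> V" using assms unfolding pm_def by auto
  then obtain a b where "e = {a, b}" "a \<noteq> b" by (auto simp: card_2_iff)
  then show ?thesis using that \<open>e \<subseteq> V\<close> by auto
qed

lemma pm_unique:
  assumes "pm E V" "e \<in> E" "e' \<in> E" "x \<in> e" "x \<in> e'"
  shows "e = e'"
  using assms unfolding pm_def by blast

lemma pm_partner:
  assumes "pm E V" "x \<in> V"
  obtains y where "{x, y} \<in> E" "y \<noteq> x" "y \<in> V"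
proof -
  obtain e where "e \<in> E" "x \<in> e" using assms unfolding pm_def by blast
  then obtain a b where ab: "e = {a, b}" "a \<noteq> b" "a \<in> V" "b \<in> V" using pm_edge[OF assms(1)] by metis
  show ?thesis
  proof (cases "x = a")
    case True
    then show ?thesis using that[of b] ab \<open>e \<in> E\<close> by auto
  next
    case False
    then have "x = b" using ab \<open>x \<in> e\<close> by auto
    then have "{x, a} = e" using ab by blast
    then show ?thesis using that[of a] ab \<open>e \<in> E\<close> \<open>x = b\<close> by blast
  qed
qed

lemma emb_into_mono: "emb_into \<sigma> M W \<Longrightarrow> W \<subseteq> W' \<Longrightarrow> emb_into \<sigma> M W'"
  unfolding emb_into_def by (elim exE conjE, intro exI conjI) auto

lemma emb_into_restrict:
  assumes "pm \<sigma> {..<2 * card \<sigma>}" "emb_into \<sigma> M W" "\<And>e. e \<in> M \<Longrightarrow> e \<subseteq> W \<Longrightarrow> e \<subseteq> W'"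
  shows "emb_into \<sigma> M W'"
proof -
  obtain g where g: "strict_mono_on {..<2 * card \<sigma>} g" "g ` {..<2 * card \<sigma>} \<subseteq> W"
     "\<forall>p<2 * card \<sigma>. \<forall>q<2 * card \<sigma>. {g p, g q} \<in> M \<longleftrightarrow> {p, q} \<in> \<sigma>"
    using assms(2) unfolding emb_into_def by blast
  have "g p \<in> W'" if "p < 2 * card \<sigma>" for p
  proof -
    have "p \<in> {..<2 * card \<sigma>}" using that by simp
    then obtain q where q: "{p, q} \<in> \<sigma>" "q \<in> {..<2 * card \<sigma>}"
      using pm_partner[OF assms(1)] by blast
    then have "{g p, g q} \<in> M" using g(3) that by simp
    moreover have "{g p, g q} \<subseteq> W" using g(2) that q(2) by auto
    ultimately show ?thesis using assms(3) by blast
  qed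
  then have "g ` {..<2 * card \<sigma>} \<subseteq> W'" by auto
  then show ?thesis using g(1,3) unfolding emb_into_def by (intro exI[of _ g]) simp
qed

lemma emb_into_transport:
  assumes sm: "strict_mono_on {..<N} h" and W: "W \<subseteq> {..<N}"
    and cond: "\<forall>x<N. \<forall>y<N. {h x, h y} \<in> M \<longleftrightarrow> {x, y} \<in> L"
  shows "emb_into \<sigma> L W \<longleftrightarrow> emb_into \<sigma> M (h ` W)"
proof
  assume "emb_into \<sigma> L W"
  then obtain g where g: "strict_mono_on {..<2 * card \<sigma>} g" "g ` {..<2 * card \<sigma>} \<subseteq> W"
     "\<forall>p<2 * card \<sigma>. \<forall>q<2 * card \<sigma>. {g p, g q} \<in> L \<longleftrightarrow> {p, q} \<in> \<sigma>"
    unfolding emb_into_def by blast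
  have "strict_mono_on {..<2 * card \<sigma>} (h \<circ> g)"
    using g(1,2) W sm by (auto simp: strict_mono_on_def subset_iff)
  moreover have "(h \<circ> g) ` {..<2 * card \<sigma>} \<subseteq> h ` W" using g(2) by auto
  moreover have "\<forall>p<2 * card \<sigma>. \<forall>q<2 * card \<sigma>. {(h \<circ> g) p, (h \<circ> g) q} \<in> M \<longleftrightarrow> {p, q} \<in> \<sigma>"
  proof (intro allI impI)
    fix p q assume pq: "p < 2 * card \<sigma>" "q < 2 * card \<sigma>"
    then have "g p < N" "g q < N" using g(2) W by auto
    then show "{(h \<circ> g) p, (h \<circ> g) q} \<in> M \<longleftrightarrow> {p, q} \<in> \<sigma>" using cond g(3) pq by simp
  qed
  ultimately show "emb_into \<sigma> M (h ` W)" unfolding emb_into_def by (intro exI[of _ "h \<circ> g"]) simp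
next
  assume "emb_into \<sigma> M (h ` W)"
  then obtain g where g: "strict_mono_on {..<2 * card \<sigma>} g" "g ` {..<2 * card \<sigma>} \<subseteq> h ` W"
     "\<forall>p<2 * card \<sigma>. \<forall>q<2 * card \<sigma>. {g p, g q} \<in> M \<longleftrightarrow> {p, q} \<in> \<sigma>"
    unfolding emb_into_def by blast
  define g' where "g' = inv_into {..<N} h \<circ> g"
  have inj: "inj_on h {..<N}" using sm strict_mono_on_imp_inj_on by blast
  have hg: "h (g' p) = g p" "g' p \<in> W" if "p < 2 * card \<sigma>" for p
  proof -
    have "g p \<in> h ` W" using g(2) that by auto
    then obtain w where "w \<in> W" "g p = h w" by blast
    then have "g' p = w" unfolding g'_def using inj W by (simp add: subset_iff)
    then show "h (g' p) = g p" "g' p \<in> W" using \<open>w \<in> W\<close> \<open>g p = h w\<close> by auto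
  qed
  have "strict_mono_on {..<2 * card \<sigma>} g'"
  proof (rule strict_mono_onI)
    fix p q assume pq: "p \<in> {..<2 * card \<sigma>}" "q \<in> {..<2 * card \<sigma>}" "p < q"
    then have "g p < g q" using g(1) strict_mono_onD by blast
    show "g' p < g' q"
    proof (rule ccontr)
      assume "\<not> g' p < g' q"
      then have "g' q \<le> g' p" by simp
      have "p < 2 * card \<sigma>" "q < 2 * card \<sigma>" using pq by auto
      then have inN: "g' q \<in> {..<N}" "g' p \<in> {..<N}" using hg(2)[of p] hg(2)[of q] W by auto
      have "h (g' q) \<le> h (g' p)"
      proof (cases "g' q = g' p")
        case False
        then have "g' q < g' p" using \<open>g' q \<le> g' p\<close> by simp
        then show ?thesis using strict_mono_onD[OF sm inN] by simp
      qed simp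
      then show False using hg pq \<open>g p < g q\<close> by auto
    qed
  qed
  moreover have "g' ` {..<2 * card \<sigma>} \<subseteq> W" using hg by auto
  moreover have "\<forall>p<2 * card \<sigma>. \<forall>q<2 * card \<sigma>. {g' p, g' q} \<in> L \<longleftrightarrow> {p, q} \<in> \<sigma>"
  proof (intro allI impI)
    fix p q assume pq: "p < 2 * card \<sigma>" "q < 2 * card \<sigma>"
    have "g' p < N" "g' q < N" using hg pq W by auto
    then have "{g' p, g' q} \<in> L \<longleftrightarrow> {h (g' p), h (g' q)} \<in> M" using cond by simp
    also have "\<dots> \<longleftrightarrow> {g p, g q} \<in> M" using hg pq by simp
    also have "\<dots> \<longleftrightarrow> {p, q} \<in> \<sigma>" using g(3) pq by simp
    finally show "{g' p, g' q} \<in> L \<longleftrightarrow> {p, q} \<in> \<sigma>" .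
  qed
  ultimately show "emb_into \<sigma> L W" unfolding emb_into_def by (intro exI[of _ g']) simp
qed



definition enum :: "nat set \<Rightarrow> nat \<Rightarrow> nat" where
  "enum A i = sorted_list_of_set A ! i"

definition emb :: "nat set \<Rightarrow> nat set set \<Rightarrow> nat set set" where
  "emb A L = (\<lambda>e. enum A ` e) ` L"

definition std :: "nat set \<Rightarrow> nat set set \<Rightarrow> nat set set" where
  "std A E = (\<lambda>e. inv_into {..<card A} (enum A) ` e) ` E"

lemma enum_sm:
  assumes "finite A"
  shows "strict_mono_on {..<card A} (enum A)"
proof (rule strict_mono_onI)
  fix i j assume "i \<in> {..<card A}" "j \<in> {..<card A}" "i < j"
  then show "enum A i < enum A j" unfolding enum_def
    using sorted_wrt_nth_less[OF strict_sorted_list_of_set, of i j A] assms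
    by (simp add: length_sorted_list_of_set)
qed

lemma enum_inj: "finite A \<Longrightarrow> inj_on (enum A) {..<card A}"
  using enum_sm strict_mono_on_imp_inj_on by blast

lemma enum_image:
  assumes "finite A"
  shows "enum A ` {..<card A} = A"
proof -
  have "A = set (sorted_list_of_set A)" using assms by simp
  also have "\<dots> = {sorted_list_of_set A ! i |i. i < length (sorted_list_of_set A)}"
    by (rule set_conv_nth)
  also have "\<dots> = enum A ` {..<card A}" using assms
    by (auto simp: enum_def length_sorted_list_of_set)
  finally show ?thesis by simp
qed

lemma enum_in: "finite A \<Longrightarrow> i < card A \<Longrightarrow> enum A i \<in> A"
  using enum_image by blast

lemma pm_emb:
  assumes "finite A" "pm L {..<card A}"
  shows "pm (emb A L) A"
  using pm_image[OF enum_inj[OF assms(1)] assms(2)] enum_image[OF assms(1)]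
  unfolding emb_def by simp

lemma pm_std:
  assumes "finite A" "pm E A"
  shows "pm (std A E) {..<card A}"
proof -
  have inj: "inj_on (inv_into {..<card A} (enum A)) A"
    using inj_on_inv_into enum_image[OF assms(1)] by (metis order_refl)
  have "inv_into {..<card A} (enum A) ` A = {..<card A}"
    using inv_into_image_cancel[OF enum_inj[OF assms(1)], of "{..<card A}"] enum_image[OF assms(1)]
    by simp
  then show ?thesis using pm_image[OF inj assms(2)] unfolding std_def by simp
qed

lemma emb_std:
  assumes "finite A" "\<Union>E \<subseteq> A"
  shows "emb A (std A E) = E"
proof -
  have "\<And>e. e \<in> E \<Longrightarrow> enum A ` inv_into {..<card A} (enum A) ` e = e"
    using image_inv_into_cancel[OF enum_image[OF assms(1)]] assms(2) by blast
  then show ?thesis unfolding emb_def std_def image_image by simp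
qed

lemma std_emb:
  assumes "finite A" "\<Union>L \<subseteq> {..<card A}"
  shows "std A (emb A L) = L"
proof -
  have "\<And>e. e \<in> L \<Longrightarrow> inv_into {..<card A} (enum A) ` enum A ` e = e"
    using inv_into_image_cancel[OF enum_inj[OF assms(1)]] assms(2) by blast
  then show ?thesis unfolding emb_def std_def image_image by simp
qed

lemma card_emb:
  assumes "finite A" "\<Union>L \<subseteq> {..<card A}"
  shows "card (emb A L) = card L"
  unfolding emb_def using card_image_image[OF enum_inj[OF assms(1)] assms(2)] .

lemma card_std:
  assumes "finite A" "\<Union>E \<subseteq> A"
  shows "card (std A E) = card E"
proof -
  have inj: "inj_on (inv_into {..<card A} (enum A)) A"
    using inj_on_inv_into enum_image[OF assms(1)] by (metis order_refl)
  show ?thesis unfolding std_def using card_image_image[OF inj assms(2)] .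
qed

lemma emb_cond:
  assumes "finite A" "A \<subseteq> W0" "{e \<in> M. e \<subseteq> W0} = emb A L" "\<Union>L \<subseteq> {..<card A}"
  shows "\<forall>x<card A. \<forall>y<card A. {enum A x, enum A y} \<in> M \<longleftrightarrow> {x, y} \<in> L"
proof (intro allI impI)
  fix x y assume xy: "x < card A" "y < card A"
  have img: "enum A ` {x, y} = {enum A x, enum A y}" by simp
  show "{enum A x, enum A y} \<in> M \<longleftrightarrow> {x, y} \<in> L"
  proof
    assume "{enum A x, enum A y} \<in> M"
    moreover have "{enum A x, enum A y} \<subseteq> W0" using enum_in[OF assms(1)] xy assms(2) by auto
    ultimately have "{enum A x, enum A y} \<in> emb A L" using assms(3) by blast
    then obtain e where e: "e \<in> L" "enum A ` e = enum A ` {x, y}" unfolding emb_def by auto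
    have "e \<subseteq> {..<card A}" using e(1) assms(4) by auto
    moreover have "{x, y} \<subseteq> {..<card A}" using xy by auto
    ultimately have "e = {x, y}" using e(2) inj_on_image_eq_iff[OF enum_inj[OF assms(1)]] by blast
    then show "{x, y} \<in> L" using e(1) by simp
  next
    assume "{x, y} \<in> L"
    then have "{enum A x, enum A y} \<in> emb A L" unfolding emb_def using img by (metis imageI)
    then show "{enum A x, enum A y} \<in> M" using assms(3) by blast
  qed
qed

lemma emb_transport:
  assumes "finite A" "A \<subseteq> W0" "{e \<in> M. e \<subseteq> W0} = emb A L" "\<Union>L \<subseteq> {..<card A}" "W \<subseteq> {..<card A}"
  shows "emb_into \<sigma> L W \<longleftrightarrow> emb_into \<sigma> M (enum A ` W)"
  using emb_into_transport[OF enum_sm[OF assms(1)] assms(5) emb_cond[OF assms(1-4)]] .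



definition cr :: "nat set \<Rightarrow> nat set \<Rightarrow> nat set set \<Rightarrow> bool" where
  "cr X Y C \<longleftrightarrow> pm C (X \<union> Y) \<and> (\<forall>e\<in>C. \<exists>x\<in>X. \<exists>y\<in>Y. e = {x, y})"

lemma cr_empty: "cr {} {} C \<longleftrightarrow> C = {}"
proof
  assume "cr {} {} C"
  then show "C = {}" unfolding cr_def by auto
next
  assume "C = {}" then show "cr {} {} C" unfolding cr_def pm_def by simp
qed

lemma cr_finite: "finite X \<Longrightarrow> finite Y \<Longrightarrow> finite {C. cr X Y C}"
proof -
  assume "finite X" "finite Y"
  have "{C. cr X Y C} \<subseteq> Pow (Pow (X \<union> Y))" unfolding cr_def pm_def by auto
  then show ?thesis using \<open>finite X\<close> \<open>finite Y\<close> finite_subset by (metis finite_Pow_iff finite_UnI)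
qed

lemma cr_insert:
  assumes "cr (X - {x}) (Y - {y}) C" "x \<in> X" "y \<in> Y" "X \<inter> Y = {}"
  shows "cr X Y (insert {x, y} C)"
proof -
  have xy: "x \<noteq> y" using assms by auto
  have U: "\<Union>C = (X - {x}) \<union> (Y - {y})" using assms(1) unfolding cr_def pm_def by auto
  have "pm {{x, y}} {x, y}" unfolding pm_def using xy by auto
  moreover have "pm C ((X - {x}) \<union> (Y - {y}))" using assms(1) unfolding cr_def by simp
  moreover have "{x, y} \<inter> ((X - {x}) \<union> (Y - {y})) = {}" using assms by auto
  ultimately have "pm ({{x, y}} \<union> C) ({x, y} \<union> ((X - {x}) \<union> (Y - {y})))" by (rule pm_Un)
  moreover have "{x, y} \<union> ((X - {x}) \<union> (Y - {y})) = X \<union> Y" using assms by auto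
  ultimately have "pm (insert {x, y} C) (X \<union> Y)" by simp
  moreover have "\<forall>e\<in>insert {x, y} C. \<exists>x\<in>X. \<exists>y\<in>Y. e = {x, y}"
    using assms unfolding cr_def by blast
  ultimately show ?thesis unfolding cr_def by blast
qed

lemma cr_notin:
  assumes "cr (X - {x}) (Y - {y}) C" "x \<notin> Y"
  shows "{x, y} \<notin> C"
proof
  assume "{x, y} \<in> C"
  then have "x \<in> \<Union>C" by auto
  then show False using assms unfolding cr_def pm_def by auto
qed

lemma cr_remove:
  assumes "cr X Y C" "x \<in> X" "X \<inter> Y = {}"
  obtains y where "y \<in> Y" "{x, y} \<in> C" "cr (X - {x}) (Y - {y}) (C - {{x, y}})"
proof -
  have pmC: "pm C (X \<union> Y)" using assms(1) unfolding cr_def by simp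
  obtain e where e: "e \<in> C" "x \<in> e" using pmC assms(2) unfolding pm_def by blast
  then obtain x' y where xy: "x' \<in> X" "y \<in> Y" "e = {x', y}" using assms(1) unfolding cr_def by blast
  have "x \<noteq> y" using assms(2,3) xy(2) by auto
  then have "x = x'" using e(2) xy(3) by auto
  then have eq: "e = {x, y}" using xy by simp
  have "pm (C - {e}) (\<Union>(C - {e}))" using pm_sub[OF pmC] by blast
  moreover have "\<Union>(C - {e}) = (X - {x}) \<union> (Y - {y})"
  proof -
    have "\<Union>(C - {e}) = \<Union>C - e"
    proof
      show "\<Union>(C - {e}) \<subseteq> \<Union>C - e"
      proof
        fix z assume "z \<in> \<Union>(C - {e})"
        then obtain e' where "e' \<in> C" "e' \<noteq> e" "z \<in> e'" by auto
        then have "e' \<inter> e = {}" using pmC e(1) unfolding pm_def by blast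
        then show "z \<in> \<Union>C - e" using \<open>z \<in> e'\<close> \<open>e' \<in> C\<close> by auto
      qed
    qed auto
    also have "\<dots> = (X \<union> Y) - {x, y}" using pmC eq unfolding pm_def by simp
    also have "\<dots> = (X - {x}) \<union> (Y - {y})" using assms(3) xy(2) assms(2) by auto
    finally show ?thesis .
  qed
  moreover have "\<forall>e'\<in>C - {e}. \<exists>a\<in>X - {x}. \<exists>b\<in>Y - {y}. e' = {a, b}"
  proof
    fix e' assume e': "e' \<in> C - {e}"
    then obtain a b where ab: "a \<in> X" "b \<in> Y" "e' = {a, b}" using assms(1) unfolding cr_def by blast
    have "e' \<inter> e = {}" using pmC e(1) e' unfolding pm_def by blast
    then have "a \<noteq> x" "b \<noteq> y" using ab eq by auto
    then show "\<exists>a\<in>X - {x}. \<exists>b\<in>Y - {y}. e' = {a, b}" using ab by blast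
  qed
  ultimately have "cr (X - {x}) (Y - {y}) (C - {e})" unfolding cr_def by simp
  then show ?thesis using that xy(2) e(1) eq by blast
qed

lemma card_cr:
  "finite X \<Longrightarrow> finite Y \<Longrightarrow> X \<inter> Y = {} \<Longrightarrow> card X = k \<Longrightarrow> card Y = k
    \<Longrightarrow> card {C. cr X Y C} = fact k"
proof (induction k arbitrary: X Y)
  case 0
  then have "X = {}" "Y = {}" by auto
  then have "{C. cr X Y C} = {{}}" using cr_empty by auto
  then show ?case by simp
next
  case (Suc k)
  then obtain x where x: "x \<in> X" by fastforce
  define F where "F y = insert {x, y} ` {C. cr (X - {x}) (Y - {y}) C}" for y
  have eq: "{C. cr X Y C} = (\<Union>y\<in>Y. F y)"
  proof
    show "{C. cr X Y C} \<subseteq> (\<Union>y\<in>Y. F y)"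
    proof
      fix C assume "C \<in> {C. cr X Y C}"
      then have "cr X Y C" by simp
      then obtain y where y: "y \<in> Y" "{x, y} \<in> C" "cr (X - {x}) (Y - {y}) (C - {{x, y}})"
        using cr_remove x Suc.prems(3) by metis
      then have "C = insert {x, y} (C - {{x, y}})" by auto
      then have "C \<in> F y" unfolding F_def using y(3) by blast
      then show "C \<in> (\<Union>y\<in>Y. F y)" using y(1) by blast
    qed
  next
    show "(\<Union>y\<in>Y. F y) \<subseteq> {C. cr X Y C}"
      unfolding F_def using cr_insert x Suc.prems(3) by blast
  qed
  have fin: "\<forall>y\<in>Y. finite (F y)" unfolding F_def using cr_finite Suc.prems by auto
  have disj: "\<forall>y\<in>Y. \<forall>y'\<in>Y. y \<noteq> y' \<longrightarrow> F y \<inter> F y' = {}"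
  proof (intro ballI impI)
    fix y y' assume yy: "y \<in> Y" "y' \<in> Y" "y \<noteq> y'"
    show "F y \<inter> F y' = {}"
    proof (rule ccontr)
      assume "F y \<inter> F y' \<noteq> {}"
      then obtain C1 C2 where C: "cr (X - {x}) (Y - {y}) C1" "cr (X - {x}) (Y - {y'}) C2"
        "insert {x, y} C1 = insert {x, y'} C2" unfolding F_def by blast
      have "{x, y} \<noteq> {x, y'}" using yy by (auto simp: doubleton_eq_iff)
      then have "{x, y} \<in> C2" using C(3) by (metis insertCI insertE)
      then have "x \<in> \<Union>C2" by auto
      then show False using C(2) Suc.prems(3) x unfolding cr_def pm_def by auto
    qed
  qed
  have cF: "card (F y) = fact k" if "y \<in> Y" for y
  proof -
    have "inj_on (insert {x, y}) {C. cr (X - {x}) (Y - {y}) C}"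
    proof (rule inj_onI)
      fix C1 C2 assume "C1 \<in> {C. cr (X - {x}) (Y - {y}) C}" "C2 \<in> {C. cr (X - {x}) (Y - {y}) C}"
        "insert {x, y} C1 = insert {x, y} C2"
      moreover have "x \<notin> Y" using x Suc.prems(3) by auto
      ultimately show "C1 = C2" using cr_notin by (metis insert_ident mem_Collect_eq)
    qed
    then have "card (F y) = card {C. cr (X - {x}) (Y - {y}) C}" unfolding F_def by (rule card_image)
    also have "\<dots> = fact k"
      using Suc.IH[of "X - {x}" "Y - {y}"] Suc.prems x that by auto
    finally show ?thesis .
  qed
  have "card {C. cr X Y C} = (\<Sum>y\<in>Y. card (F y))"
    unfolding eq using card_UN_disjoint[OF _ fin disj] Suc.prems by simp
  also have "\<dots> = Suc k * fact k" using cF Suc.prems by simp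
  finally show ?case by simp
qed

lemma cr_cards:
  assumes "cr X Y C" "finite X" "finite Y" "\<forall>x\<in>X. \<forall>y\<in>Y. x < y"
  shows "card X = card C" "card Y = card C"
proof -
  have pmC: "pm C (X \<union> Y)" using assms(1) unfolding cr_def by simp
  have XY: "X \<inter> Y = {}" using assms(4) by auto
  have edges: "\<forall>e\<in>C. \<exists>x\<in>X. \<exists>y\<in>Y. e = {x, y}" using assms(1) unfolding cr_def by simp
  have mn: "Min e \<in> X \<and> Max e \<in> Y" if eC: "e \<in> C" for e
  proof -
    obtain x y where "x \<in> X" "y \<in> Y" "e = {x, y}" using edges eC by meson
    moreover have "x < y" using assms(4) calculation by blast
    ultimately show ?thesis by (simp add: min_def max_def)
  qed
  have fe: "finite e \<and> e \<noteq> {}" if "e \<in> C" for e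
  proof -
    have "card e = 2" using pmC that unfolding pm_def by simp
    then show ?thesis by (metis card.empty card.infinite zero_neq_numeral)
  qed
  have "bij_betw Min C X"
  proof (rule bij_betw_imageI)
    show "inj_on Min C"
    proof (rule inj_onI)
      fix e e' assume "e \<in> C" "e' \<in> C" "Min e = Min e'"
      then have "Min e \<in> e \<inter> e'" using fe[of e] fe[of e'] Min_in by (metis IntI)
      then show "e = e'" using pm_unique[OF pmC \<open>e \<in> C\<close> \<open>e' \<in> C\<close>] by blast
    qed
    show "Min ` C = X"
    proof
      show "Min ` C \<subseteq> X" using mn by auto
      show "X \<subseteq> Min ` C"
      proof
        fix x assume "x \<in> X"
        then obtain e where "e \<in> C" "x \<in> e" using pmC unfolding pm_def by blast
        then obtain a b where "a \<in> X" "b \<in> Y" "e = {a, b}" using edges by meson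
        then have "x = a" using \<open>x \<in> e\<close> \<open>x \<in> X\<close> XY by auto
        moreover have "a < b" using assms(4) \<open>a \<in> X\<close> \<open>b \<in> Y\<close> by blast
        ultimately have "Min e = x" using \<open>e = {a, b}\<close> by (simp add: min_def)
        then show "x \<in> Min ` C" using \<open>e \<in> C\<close> by blast
      qed
    qed
  qed
  then show "card X = card C" by (simp add: bij_betw_same_card)
  have "bij_betw Max C Y"
  proof (rule bij_betw_imageI)
    show "inj_on Max C"
    proof (rule inj_onI)
      fix e e' assume "e \<in> C" "e' \<in> C" "Max e = Max e'"
      then have "Max e \<in> e \<inter> e'" using fe[of e] fe[of e'] Max_in by (metis IntI)
      then show "e = e'" using pm_unique[OF pmC \<open>e \<in> C\<close> \<open>e' \<in> C\<close>] by blast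
    qed
    show "Max ` C = Y"
    proof
      show "Max ` C \<subseteq> Y" using mn by auto
      show "Y \<subseteq> Max ` C"
      proof
        fix y assume "y \<in> Y"
        then obtain e where "e \<in> C" "y \<in> e" using pmC unfolding pm_def by blast
        then obtain a b where "a \<in> X" "b \<in> Y" "e = {a, b}" using edges by meson
        then have "y = b" using \<open>y \<in> e\<close> \<open>y \<in> Y\<close> XY by auto
        moreover have "a < b" using assms(4) \<open>a \<in> X\<close> \<open>b \<in> Y\<close> by blast
        ultimately have "Max e = y" using \<open>e = {a, b}\<close> by (simp add: max_def)
        then show "y \<in> Max ` C" using \<open>e \<in> C\<close> by blast
      qed
    qed
  qed
  then show "card Y = card C" by (simp add: bij_betw_same_card)
qed



lemma image_add_lessThan: "(\<lambda>x. x + a) ` {..<b} = {a..<a + (b::nat)}"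
proof
  show "(\<lambda>x. x + a) ` {..<b} \<subseteq> {a..<a + b}" by auto
  show "{a..<a + b} \<subseteq> (\<lambda>x. x + a) ` {..<b}"
  proof
    fix x assume "x \<in> {a..<a + b}"
    then have "x = (x - a) + a" "x - a < b" by auto
    then show "x \<in> (\<lambda>x. x + a) ` {..<b}" by (metis imageI lessThan_iff)
  qed
qed

lemma juxt_pm:
  assumes "pm \<sigma> {..<2 * card \<sigma>}" "pm \<tau> {..<2 * card \<tau>}"
  shows "pm (juxt \<sigma> \<tau>) {..<2 * (card \<sigma> + card \<tau>)}" "card (juxt \<sigma> \<tau>) = card \<sigma> + card \<tau>"
proof -
  let ?s = "card \<sigma>" and ?t = "card \<tau>"
  have inj: "inj_on (\<lambda>x. x + 2 * ?s) {..<2 * ?t}" by (auto simp: inj_on_def)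
  have "pm ((\<lambda>e. (\<lambda>x. x + 2 * ?s) ` e) ` \<tau>) ((\<lambda>x. x + 2 * ?s) ` {..<2 * ?t})"
    by (rule pm_image[OF inj assms(2)])
  then have p2: "pm ((\<lambda>e. (\<lambda>x. x + 2 * ?s) ` e) ` \<tau>) {2 * ?s..<2 * ?s + 2 * ?t}"
    using image_add_lessThan by metis
  have "pm (\<sigma> \<union> (\<lambda>e. (\<lambda>x. x + 2 * ?s) ` e) ` \<tau>) ({..<2 * ?s} \<union> {2 * ?s..<2 * ?s + 2 * ?t})"
    by (rule pm_Un[OF assms(1) p2]) auto
  moreover have "{..<2 * ?s} \<union> {2 * ?s..<2 * ?s + 2 * ?t} = {..<2 * (?s + ?t)}" by auto
  ultimately show pmJ: "pm (juxt \<sigma> \<tau>) {..<2 * (?s + ?t)}" unfolding juxt_def by simp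
  show "card (juxt \<sigma> \<tau>) = ?s + ?t" using pm_is_matching(2)[OF pmJ] .
qed

lemma juxt_mem1:
  assumes "pm \<sigma> {..<2 * card \<sigma>}" "p < 2 * card \<sigma>"
  shows "{p, q} \<in> juxt \<sigma> \<tau> \<longleftrightarrow> {p, q} \<in> \<sigma>"
proof -
  have "{p, q} \<notin> (\<lambda>e. (\<lambda>x. x + 2 * card \<sigma>) ` e) ` \<tau>"
  proof
    assume "{p, q} \<in> (\<lambda>e. (\<lambda>x. x + 2 * card \<sigma>) ` e) ` \<tau>"
    then obtain e where "{p, q} = (\<lambda>x. x + 2 * card \<sigma>) ` e" by blast
    then have "p \<in> (\<lambda>x. x + 2 * card \<sigma>) ` e" by blast
    then show False using assms(2) by auto
  qed
  then show ?thesis unfolding juxt_def by blast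
qed

lemma juxt_mem2:
  assumes "pm \<sigma> {..<2 * card \<sigma>}"
  shows "{p + 2 * card \<sigma>, q + 2 * card \<sigma>} \<in> juxt \<sigma> \<tau> \<longleftrightarrow> {p, q} \<in> \<tau>"
proof -
  have "{p + 2 * card \<sigma>, q + 2 * card \<sigma>} \<notin> \<sigma>"
  proof
    assume "{p + 2 * card \<sigma>, q + 2 * card \<sigma>} \<in> \<sigma>"
    then have "p + 2 * card \<sigma> \<in> \<Union>\<sigma>" by blast
    then show False using assms unfolding pm_def by auto
  qed
  moreover have "{p + 2 * card \<sigma>, q + 2 * card \<sigma>} = (\<lambda>x. x + 2 * card \<sigma>) ` {p, q}" by simp
  moreover have "inj (\<lambda>e. (\<lambda>x. x + 2 * card \<sigma>) ` e)"
    by (rule injI) (metis inj_def inj_image_eq_iff add_right_imp_eq)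
  ultimately show ?thesis unfolding juxt_def by (metis (no_types, lifting) UnE UnI2 image_eqI inj_image_mem_iff)
qed

lemma juxt_mem3:
  assumes "pm \<sigma> {..<2 * card \<sigma>}" "p < 2 * card \<sigma>" "2 * card \<sigma> \<le> q"
  shows "{p, q} \<notin> juxt \<sigma> \<tau>"
proof -
  have "{p, q} \<notin> \<sigma>"
  proof
    assume "{p, q} \<in> \<sigma>"
    then have "q \<in> \<Union>\<sigma>" by blast
    then show False using assms unfolding pm_def by auto
  qed
  then show ?thesis using juxt_mem1[OF assms(1,2)] by blast
qed



lemma juxt_split:
  assumes ps: "pm \<sigma> {..<2 * card \<sigma>}" and pt: "pm \<tau> {..<2 * card \<tau>}" and s1: "card \<sigma> \<ge> 1"
    and c: "contains M (juxt \<sigma> \<tau>)"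
  obtains p0 where "p0 < 2 * card M" "emb_into \<sigma> M {..<Suc p0}" "emb_into \<tau> M {p0<..}"
proof -
  let ?s = "card \<sigma>" and ?t = "card \<tau>"
  have cJ: "card (juxt \<sigma> \<tau>) = ?s + ?t" using juxt_pm[OF ps pt] by simp
  obtain G where G: "strict_mono_on {..<2 * (?s + ?t)} G" "G ` {..<2 * (?s + ?t)} \<subseteq> {..<2 * card M}"
    "\<forall>p<2 * (?s + ?t). \<forall>q<2 * (?s + ?t). {G p, G q} \<in> M \<longleftrightarrow> {p, q} \<in> juxt \<sigma> \<tau>"
    using c unfolding contains_def cJ by blast
  define p0 where "p0 = G (2 * ?s - 1)"
  have "2 * ?s - 1 \<in> {..<2 * (?s + ?t)}" using s1 by simp
  then have p0M: "p0 < 2 * card M" unfolding p0_def using G(2) by blast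
  have le: "G p \<le> p0" if "p < 2 * ?s" for p
  proof (cases "p = 2 * ?s - 1")
    case False
    then have "p < 2 * ?s - 1" using that by simp
    moreover have "p \<in> {..<2 * (?s + ?t)}" "2 * ?s - 1 \<in> {..<2 * (?s + ?t)}" using that s1 by auto
    ultimately have "G p < G (2 * ?s - 1)" using strict_mono_onD[OF G(1)] by blast
    then show ?thesis unfolding p0_def by simp
  qed (simp add: p0_def)
  have "strict_mono_on {..<2 * ?s} G"
  proof (rule strict_mono_onI)
    fix p q assume "p \<in> {..<2 * ?s}" "q \<in> {..<2 * ?s}" "p < q"
    then show "G p < G q" using strict_mono_onD[OF G(1)] by simp
  qed
  moreover have "G ` {..<2 * ?s} \<subseteq> {..<Suc p0}" using le by (auto simp: less_Suc_eq_le)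
  moreover have "\<forall>p<2 * ?s. \<forall>q<2 * ?s. {G p, G q} \<in> M \<longleftrightarrow> {p, q} \<in> \<sigma>"
  proof (intro allI impI)
    fix p q assume "p < 2 * ?s" "q < 2 * ?s"
    then show "{G p, G q} \<in> M \<longleftrightarrow> {p, q} \<in> \<sigma>" using G(3) juxt_mem1[OF ps] by simp
  qed
  ultimately have e1: "emb_into \<sigma> M {..<Suc p0}" unfolding emb_into_def by (intro exI[of _ G]) simp
  define h where "h q = G (q + 2 * ?s)" for q
  have "strict_mono_on {..<2 * ?t} h"
  proof (rule strict_mono_onI)
    fix p q assume "p \<in> {..<2 * ?t}" "q \<in> {..<2 * ?t}" "p < q"
    then show "h p < h q" unfolding h_def using strict_mono_onD[OF G(1)] by simp
  qed
  moreover have "h ` {..<2 * ?t} \<subseteq> {p0<..}"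
  proof
    fix x assume "x \<in> h ` {..<2 * ?t}"
    then obtain q where "q < 2 * ?t" "x = G (q + 2 * ?s)" unfolding h_def by auto
    moreover have "2 * ?s - 1 < q + 2 * ?s" using s1 by simp
    ultimately show "x \<in> {p0<..}" unfolding p0_def using strict_mono_onD[OF G(1)] s1 by simp
  qed
  moreover have "\<forall>p<2 * ?t. \<forall>q<2 * ?t. {h p, h q} \<in> M \<longleftrightarrow> {p, q} \<in> \<tau>"
  proof (intro allI impI)
    fix p q assume "p < 2 * ?t" "q < 2 * ?t"
    then show "{h p, h q} \<in> M \<longleftrightarrow> {p, q} \<in> \<tau>" unfolding h_def using G(3) juxt_mem2[OF ps] by simp
  qed
  ultimately have e2: "emb_into \<tau> M {p0<..}" unfolding emb_into_def by (intro exI[of _ h]) simp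
  show ?thesis using that p0M e1 e2 by blast
qed

lemma juxt_contains_sigma:
  assumes ps: "pm \<sigma> {..<2 * card \<sigma>}" and pt: "pm \<tau> {..<2 * card \<tau>}" and s1: "card \<sigma> \<ge> 1"
    and c: "contains M (juxt \<sigma> \<tau>)"
  shows "contains M \<sigma>"
proof -
  obtain p0 where "p0 < 2 * card M" "emb_into \<sigma> M {..<Suc p0}"
    using juxt_split[OF assms] by blast
  then show ?thesis unfolding contains_emb by (elim emb_into_mono) auto
qed

lemma juxt_combine:
  assumes ps: "pm \<sigma> {..<2 * card \<sigma>}" and pt: "pm \<tau> {..<2 * card \<tau>}" and pM: "pm M V"
    and e1: "emb_into \<sigma> M {..<c}" and cM: "c \<le> 2 * card M" and e2: "emb_into \<tau> M {c..<2 * card M}"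
  shows "contains M (juxt \<sigma> \<tau>)"
proof -
  let ?s = "card \<sigma>" and ?t = "card \<tau>"
  have cJ: "card (juxt \<sigma> \<tau>) = ?s + ?t" using juxt_pm[OF ps pt] by simp
  obtain g where g: "strict_mono_on {..<2 * ?s} g" "g ` {..<2 * ?s} \<subseteq> {..<c}"
     "\<forall>p<2 * ?s. \<forall>q<2 * ?s. {g p, g q} \<in> M \<longleftrightarrow> {p, q} \<in> \<sigma>"
    using e1 unfolding emb_into_def by blast
  obtain h where h: "strict_mono_on {..<2 * ?t} h" "h ` {..<2 * ?t} \<subseteq> {c..<2 * card M}"
     "\<forall>p<2 * ?t. \<forall>q<2 * ?t. {h p, h q} \<in> M \<longleftrightarrow> {p, q} \<in> \<tau>"
    using e2 unfolding emb_into_def by blast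
  have gc: "g p < c" if "p < 2 * ?s" for p using g(2) that by auto
  have hc: "c \<le> h q" "h q < 2 * card M" if "q < 2 * ?t" for q using h(2) that by auto
  have mixed: "{g p, h q} \<notin> M" if pq: "p < 2 * ?s" "q < 2 * ?t" for p q
  proof
    assume a: "{g p, h q} \<in> M"
    obtain r where r: "{p, r} \<in> \<sigma>" "r \<in> {..<2 * ?s}" using pm_partner[OF ps, of p] pq(1) by auto
    then have "{g p, g r} \<in> M" using g(3) pq(1) by simp
    then have "{g p, g r} = {g p, h q}" using pm_unique[OF pM _ a] by blast
    then have "h q \<in> {g p, g r}" by blast
    then show False using gc[of p] gc[of r] hc[of q] pq r(2) by auto
  qed
  define G where "G p = (if p < 2 * ?s then g p else h (p - 2 * ?s))" for p
  have "strict_mono_on {..<2 * (?s + ?t)} G"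
  proof (rule strict_mono_onI)
    fix p q assume pq: "p \<in> {..<2 * (?s + ?t)}" "q \<in> {..<2 * (?s + ?t)}" "p < q"
    show "G p < G q"
    proof (cases "q < 2 * ?s")
      case True
      then show ?thesis unfolding G_def using pq strict_mono_onD[OF g(1)] by simp
    next
      case False
      note qF = False
      show ?thesis
      proof (cases "p < 2 * ?s")
        case True
        have "q - 2 * ?s < 2 * ?t" using qF pq by auto
        then show ?thesis unfolding G_def using True qF gc[of p] hc[of "q - 2 * ?s"] by fastforce
      next
        case False
        then show ?thesis unfolding G_def using qF pq strict_mono_onD[OF h(1)] by simp
      qed
    qed
  qed
  moreover have "G ` {..<2 * (?s + ?t)} \<subseteq> {..<2 * card M}"
  proof
    fix x assume "x \<in> G ` {..<2 * (?s + ?t)}"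
    then obtain p where p: "p < 2 * (?s + ?t)" "x = G p" by auto
    show "x \<in> {..<2 * card M}"
    proof (cases "p < 2 * ?s")
      case True
      then show ?thesis using p gc[of p] cM unfolding G_def by simp
    next
      case False
      then have "p - 2 * ?s < 2 * ?t" using p by auto
      then show ?thesis using p False hc[of "p - 2 * ?s"] unfolding G_def by simp
    qed
  qed
  moreover have "\<forall>p<2 * (?s + ?t). \<forall>q<2 * (?s + ?t). {G p, G q} \<in> M \<longleftrightarrow> {p, q} \<in> juxt \<sigma> \<tau>"
  proof (intro allI impI)
    fix p q assume pq: "p < 2 * (?s + ?t)" "q < 2 * (?s + ?t)"
    show "{G p, G q} \<in> M \<longleftrightarrow> {p, q} \<in> juxt \<sigma> \<tau>"
    proof (cases "p < 2 * ?s")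
      case pT: True
      show ?thesis
      proof (cases "q < 2 * ?s")
        case True
        then show ?thesis unfolding G_def using pT g(3) juxt_mem1[OF ps pT] by simp
      next
        case False
        then have "{p, q} \<notin> juxt \<sigma> \<tau>" using juxt_mem3[OF ps pT] by simp
        moreover have "{G p, G q} \<notin> M" unfolding G_def using False pT mixed[of p "q - 2 * ?s"] pq by simp
        ultimately show ?thesis by simp
      qed
    next
      case pF: False
      show ?thesis
      proof (cases "q < 2 * ?s")
        case True
        then have "{q, p} \<notin> juxt \<sigma> \<tau>" using juxt_mem3[OF ps True] pF by simp
        moreover have "{G q, G p} \<notin> M" unfolding G_def using True pF mixed[of q "p - 2 * ?s"] pq by simp
        ultimately show ?thesis by (simp add: insert_commute)
      next
        case False
        have "{G p, G q} \<in> M \<longleftrightarrow> {p - 2 * ?s, q - 2 * ?s} \<in> \<tau>"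
          unfolding G_def using False pF h(3) pq by simp
        also have "\<dots> \<longleftrightarrow> {(p - 2 * ?s) + 2 * ?s, (q - 2 * ?s) + 2 * ?s} \<in> juxt \<sigma> \<tau>"
          using juxt_mem2[OF ps] by simp
        also have "\<dots> \<longleftrightarrow> {p, q} \<in> juxt \<sigma> \<tau>" using False pF by simp
        finally show ?thesis .
      qed
    qed
  qed
  ultimately show ?thesis unfolding contains_def cJ by (intro exI[of _ G]) simp
qed



lemma dr_lemma:
  assumes mL: "is_matching L" and cL: "card L = l" and l1: "l \<ge> 1" and ps: "pm \<sigma> {..<2 * card \<sigma>}"
  shows "contains (delete_rightmost L) \<sigma> \<longleftrightarrow> emb_into \<sigma> L {..<2 * l - 1}"
proof -
  define N where "N = 2 * l"
  have pmL: "pm L {..<N}" using mL cL unfolding is_matching_pm N_def by simp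
  have "N - 1 \<in> {..<N}" using l1 unfolding N_def by simp
  then obtain a where a: "{N - 1, a} \<in> L" "a \<noteq> N - 1" "a \<in> {..<N}" using pm_partner[OF pmL] by blast
  define e0 where "e0 = {N - 1, a}"
  have aN: "a < N - 1" using a by auto
  have re: "rightmost_edge L = e0"
    unfolding rightmost_edge_def
  proof (rule the_equality)
    show "e0 \<in> L \<and> 2 * card L - 1 \<in> e0" using a cL unfolding e0_def N_def by simp
    fix e assume "e \<in> L \<and> 2 * card L - 1 \<in> e"
    then show "e = e0" using pm_unique[OF pmL _ a(1)] cL unfolding e0_def N_def by auto
  qed
  have mina: "Min e0 = a" unfolding e0_def using aN by (simp add: min_def)
  define r where "r x = (if x < a then x else x - 1)" for x
  define h where "h x = (if x < a then x else Suc x)" for x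
  have D: "delete_rightmost L = (\<lambda>e. r ` e) ` (L - {e0})"
    unfolding delete_rightmost_def Let_def re mina r_def by simp
  have disj: "e \<inter> e0 = {}" if eL: "e \<in> L - {e0}" for e
  proof -
    have "\<forall>e\<in>L. \<forall>e'\<in>L. e \<noteq> e' \<longrightarrow> e \<inter> e' = {}" using pmL unfolding pm_def by simp
    then show ?thesis using eL a(1) unfolding e0_def by simp
  qed
  have sub: "e \<subseteq> {..<N}" if eL: "e \<in> L" for e
  proof -
    have "\<Union>L = {..<N}" using pmL unfolding pm_def by simp
    then show ?thesis using eL by blast
  qed
  have rh: "r (h x) = x" for x unfolding r_def h_def by simp
  have hr: "h (r z) = z" if "z \<noteq> a" for z unfolding r_def h_def using that by auto
  have injr: "inj_on r ({..<N} - {a})"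
    by (rule inj_on_inverseI[where g = h]) (simp add: hr)
  have U: "\<Union>(L - {e0}) \<subseteq> {..<N} - {a}" using disj sub unfolding e0_def by blast
  have "finite L" using pm_card(1)[OF pmL] by simp
  then have "card (L - {e0}) = l - 1" using a(1) cL unfolding e0_def by simp
  then have cD: "card (delete_rightmost L) = l - 1"
    unfolding D using card_image_image[OF injr U] by simp
  have smh: "strict_mono_on {..<N - 2} h"
  proof (rule strict_mono_onI)
    fix x y :: nat assume "x < y"
    then show "h x < h y" unfolding h_def by (cases "x < a"; cases "y < a") simp_all
  qed
  have cond: "\<forall>x<N - 2. \<forall>y<N - 2. {h x, h y} \<in> L \<longleftrightarrow> {x, y} \<in> delete_rightmost L"
  proof (intro allI impI)
    fix x y assume xy: "x < N - 2" "y < N - 2"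
    show "{h x, h y} \<in> L \<longleftrightarrow> {x, y} \<in> delete_rightmost L"
    proof
      assume "{h x, h y} \<in> L"
      moreover have "h x < N - 1" "h y < N - 1" using xy unfolding h_def by auto
      then have "{h x, h y} \<noteq> e0" unfolding e0_def by (auto simp: doubleton_eq_iff)
      ultimately have "{h x, h y} \<in> L - {e0}" by simp
      moreover have "r ` {h x, h y} = {x, y}" using rh by simp
      ultimately show "{x, y} \<in> delete_rightmost L" unfolding D by (metis imageI)
    next
      assume "{x, y} \<in> delete_rightmost L"
      then obtain e where e: "e \<in> L - {e0}" "r ` e = {x, y}" unfolding D by auto
      have "a \<notin> e" using disj[OF e(1)] unfolding e0_def by blast
      then have "h ` r ` e = e" using hr by (force simp: image_image)
      then have "e = {h x, h y}" using e(2) by auto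
      then show "{h x, h y} \<in> L" using e(1) by simp
    qed
  qed
  have himg: "h ` {..<N - 2} = {..<N - 1} - {a}"
  proof
    show "h ` {..<N - 2} \<subseteq> {..<N - 1} - {a}" unfolding h_def using aN by auto
    show "{..<N - 1} - {a} \<subseteq> h ` {..<N - 2}"
    proof
      fix z assume z: "z \<in> {..<N - 1} - {a}"
      then have "r z < N - 2" unfolding r_def using aN by auto
      then show "z \<in> h ` {..<N - 2}" using hr[of z] z by (metis DiffD2 imageI insertI1 lessThan_iff)
    qed
  qed
  have "contains (delete_rightmost L) \<sigma> \<longleftrightarrow> emb_into \<sigma> (delete_rightmost L) {..<N - 2}"
    unfolding contains_emb cD N_def using l1 by (simp add: right_diff_distrib')
  also have "\<dots> \<longleftrightarrow> emb_into \<sigma> L ({..<N - 1} - {a})"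
    using emb_into_transport[OF smh _ cond, of "{..<N - 2}"] himg by simp
  also have "\<dots> \<longleftrightarrow> emb_into \<sigma> L {..<N - 1}"
  proof
    assume "emb_into \<sigma> L ({..<N - 1} - {a})"
    then show "emb_into \<sigma> L {..<N - 1}" by (rule emb_into_mono) auto
  next
    assume "emb_into \<sigma> L {..<N - 1}"
    then show "emb_into \<sigma> L ({..<N - 1} - {a})"
    proof (rule emb_into_restrict[OF ps])
      fix e assume e: "e \<in> L" "e \<subseteq> {..<N - 1}"
      have "a \<notin> e"
      proof
        assume "a \<in> e"
        then have "e = e0" using pm_unique[OF pmL e(1) a(1)] unfolding e0_def by simp
        then show False using e(2) unfolding e0_def by auto
      qed
      then show "e \<subseteq> {..<N - 1} - {a}" using e(2) by auto
    qed
  qed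
  finally show ?thesis unfolding N_def .
qed



lemma emb_nonempty:
  assumes "emb_into \<sigma> M W" "card \<sigma> \<ge> 1"
  shows "W \<noteq> {}"
proof -
  obtain g where "g ` {..<2 * card \<sigma>} \<subseteq> W" using assms(1) unfolding emb_into_def by blast
  moreover have "0 \<in> {..<2 * card \<sigma>}" using assms(2) by simp
  ultimately show ?thesis by blast
qed

lemma enum_max:
  assumes "finite A" "A \<subseteq> {..<c}" "c - 1 \<in> A"
  shows "enum A ` {..<card A - 1} = A - {c - 1}"
proof -
  have img: "enum A ` {..<card A} = A" using enum_image[OF assms(1)] .
  obtain j where j: "j < card A" "enum A j = c - 1" using assms(3) img by (metis imageE lessThan_iff)
  have jmax: "j = card A - 1"
  proof (rule ccontr)
    assume "j \<noteq> card A - 1"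
    then have "j < card A - 1" using j by simp
    moreover have "j \<in> {..<card A}" "card A - 1 \<in> {..<card A}" using j by auto
    ultimately have "enum A j < enum A (card A - 1)"
      using strict_mono_onD[OF enum_sm[OF assms(1)]] by blast
    moreover have "enum A (card A - 1) \<in> A" using enum_in[OF assms(1)] j by simp
    ultimately show False using j assms(2) by auto
  qed
  show ?thesis
  proof
    show "enum A ` {..<card A - 1} \<subseteq> A - {c - 1}"
    proof
      fix z assume "z \<in> enum A ` {..<card A - 1}"
      then obtain i where i: "i < card A - 1" "z = enum A i" by auto
      then have "z < c - 1" using strict_mono_onD[OF enum_sm[OF assms(1)], of i j] j jmax by simp
      moreover have "z \<in> A" using enum_in[OF assms(1)] i by simp
      ultimately show "z \<in> A - {c - 1}" by simp
    qed
    show "A - {c - 1} \<subseteq> enum A ` {..<card A - 1}"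
    proof
      fix z assume z: "z \<in> A - {c - 1}"
      then obtain i where i: "i < card A" "z = enum A i" using img by (metis DiffD1 imageE lessThan_iff)
      then have "i \<noteq> card A - 1" using z j jmax by auto
      then show "z \<in> enum A ` {..<card A - 1}" using i by simp
    qed
  qed
qed

lemma finite_matchings: "finite {M. is_matching M \<and> card M = m}"
proof -
  have "{M. is_matching M \<and> card M = m} \<subseteq> Pow (Pow {..<2 * m})"
    unfolding is_matching_def by auto
  then show ?thesis by (rule finite_subset) simp
qed

definition cut :: "nat set set \<Rightarrow> nat set set \<Rightarrow> nat" where
  "cut \<sigma> M = (LEAST c. emb_into \<sigma> M {..<c})"

definition Tset :: "nat set set \<Rightarrow> nat set set \<Rightarrow> nat \<Rightarrow> nat set set set" where
  "Tset \<sigma> \<tau> n = {M. is_matching M \<and> card M = n \<and> contains M \<sigma> \<and> \<not> contains M (juxt \<sigma> \<tau>)}"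

definition Tlk :: "nat set set \<Rightarrow> nat set set \<Rightarrow> nat \<Rightarrow> nat \<Rightarrow> nat \<Rightarrow> nat set set set" where
  "Tlk \<sigma> \<tau> n l k = {M \<in> Tset \<sigma> \<tau> n. card {e \<in> M. e \<subseteq> {..<cut \<sigma> M}} = l \<and> cut \<sigma> M = 2 * l + k}"

lemma cut_eq:
  assumes "emb_into \<sigma> M {..<c}" "\<not> emb_into \<sigma> M {..<c - 1}" "c \<ge> 1"
  shows "cut \<sigma> M = c"
  unfolding cut_def
proof (rule Least_equality)
  show "emb_into \<sigma> M {..<c}" by fact
  fix c' assume "emb_into \<sigma> M {..<c'}"
  show "c \<le> c'"
  proof (rule ccontr)
    assume "\<not> c \<le> c'"
    then have "{..<c'} \<subseteq> {..<c - 1}" by auto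
    then show False using assms(2) emb_into_mono \<open>emb_into \<sigma> M {..<c'}\<close> by blast
  qed
qed

lemma psi_props:
  assumes ms: "is_matching \<sigma>" and s1: "card \<sigma> \<ge> 1" and mt: "is_matching \<tau>" and lkn: "l + k \<le> n"
    and X: "X \<subseteq> {..<2 * l + k - 1}" "card X = k"
    and Y: "Y \<subseteq> {2 * l + k..<2 * n}" "card Y = k"
    and C: "cr X Y C" and L: "L \<in> mu l \<sigma>" and V: "V \<in> avoiders (n - l - k) {\<tau>}"
    and cdef: "c = 2 * l + k" and Adef: "A = {..<c} - X" and Bdef: "B = {c..<2 * n} - Y"
    and Mdef: "M = emb A L \<union> C \<union> emb B V"
  shows "M \<in> Tset \<sigma> \<tau> n" "cut \<sigma> M = c" "{e \<in> M. e \<subseteq> {..<c}} = emb A L"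
    "{e \<in> M. e \<subseteq> {c..}} = emb B V" "{e \<in> M. \<not> e \<subseteq> {..<c} \<and> \<not> e \<subseteq> {c..}} = C"
    "card A = 2 * l" "card B = 2 * (n - l - k)" "card {e \<in> M. e \<subseteq> {..<c}} = l"
proof -
  have ps: "pm \<sigma> {..<2 * card \<sigma>}" using ms is_matching_pm by blast
  have pt: "pm \<tau> {..<2 * card \<tau>}" using mt is_matching_pm by blast
  have mL: "is_matching L" "card L = l" "contains L \<sigma>" "L \<noteq> {} \<longrightarrow> \<not> contains (delete_rightmost L) \<sigma>"
    using L unfolding mu_def minimally_contains_def by auto
  have mV: "is_matching V" "card V = n - l - k" "\<not> contains V \<tau>"
    using V unfolding avoiders_def by auto
  have "{..<2 * l} \<noteq> {}" using emb_nonempty[OF mL(3)[unfolded contains_emb] s1] mL(2) by simp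
  then have l1: "l \<ge> 1" by (cases l) auto
  have fX: "finite X" using X(1) finite_subset by blast
  have fY: "finite Y" using Y(1) finite_subset by blast
  have XY: "\<forall>x\<in>X. \<forall>y\<in>Y. x < y" using X(1) Y(1) cdef by fastforce
  have "X \<subseteq> {..<c}" using X(1) cdef by auto
  then show cA: "card A = 2 * l" unfolding Adef using card_Diff_subset[OF fX, of "{..<c}"] X(2) cdef by simp
  have "Y \<subseteq> {c..<2 * n}" using Y(1) cdef by simp
  then show cB: "card B = 2 * (n - l - k)" unfolding Bdef using card_Diff_subset[OF fY, of "{c..<2 * n}"] Y(2) cdef lkn by simp
  have fA: "finite A" unfolding Adef by simp
  have fB: "finite B" unfolding Bdef by simp
  have pmL: "pm L {..<card A}" using mL(1,2) cA is_matching_pm by simp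
  have pmV: "pm V {..<card B}" using mV(1,2) cB is_matching_pm by simp
  have uL: "\<Union>L \<subseteq> {..<card A}" using pmL unfolding pm_def by simp
  have uV: "\<Union>V \<subseteq> {..<card B}" using pmV unfolding pm_def by simp
  have pA: "pm (emb A L) A" by (rule pm_emb[OF fA pmL])
  have pB: "pm (emb B V) B" by (rule pm_emb[OF fB pmV])
  have pC: "pm C (X \<union> Y)" using C unfolding cr_def by simp
  have Cedge: "\<forall>e\<in>C. \<exists>x\<in>X. \<exists>y\<in>Y. e = {x, y}" using C unfolding cr_def by simp
  have c1A: "c - 1 \<in> A" unfolding Adef using X(1) cdef l1 by auto
  have Asub: "A \<subseteq> {..<c}" unfolding Adef by auto
  have Bsub: "B \<subseteq> {c..}" unfolding Bdef by auto
  have Xsub: "X \<subseteq> {..<c}" using X(1) cdef by auto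
  have Ysub: "Y \<subseteq> {c..}" using Y(1) cdef by auto
  have pAC: "pm (emb A L \<union> C) (A \<union> (X \<union> Y))"
    by (rule pm_Un[OF pA pC]) (use Asub Ysub in \<open>auto simp: Adef\<close>)
  have pM0: "pm M ((A \<union> (X \<union> Y)) \<union> B)" unfolding Mdef
    by (rule pm_Un[OF pAC pB]) (use Xsub Asub Bsub in \<open>auto simp: Bdef\<close>)
  have "(A \<union> (X \<union> Y)) \<union> B = {..<2 * n}"
    using Xsub Y(1) cdef lkn unfolding Adef Bdef by auto
  then have pM: "pm M {..<2 * n}" using pM0 by simp
  have mM: "is_matching M" "card M = n" using pm_is_matching[OF pM] by auto
  have ne: "e \<noteq> {}" if "e \<in> M" for e
  proof -
    have "card e = 2" using pM that unfolding pm_def by simp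
    then show ?thesis by auto
  qed
  have subA: "e \<subseteq> A" if "e \<in> emb A L" for e using pA that unfolding pm_def by auto
  have subB: "e \<subseteq> B" if "e \<in> emb B V" for e using pB that unfolding pm_def by auto
  show inner: "{e \<in> M. e \<subseteq> {..<c}} = emb A L"
  proof
    show "{e \<in> M. e \<subseteq> {..<c}} \<subseteq> emb A L"
    proof
      fix e assume e: "e \<in> {e \<in> M. e \<subseteq> {..<c}}"
      show "e \<in> emb A L"
      proof (rule ccontr)
        assume "e \<notin> emb A L"
        then consider "e \<in> C" | "e \<in> emb B V" using e unfolding Mdef by blast
        then show False
        proof cases
          case 1
          then obtain x y where "y \<in> Y" "e = {x, y}" using Cedge by blast
          then show False using e Ysub by auto
        next
          case 2
          then have ec: "e \<subseteq> {c..}" using subB Bsub by blast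
          have "e \<noteq> {}" using e ne by simp
          then obtain z where z: "z \<in> e" by blast
          have "z \<in> {c..}" using ec z by blast
          moreover have "z \<in> {..<c}" using e z by blast
          ultimately show False by simp
        qed
      qed
    qed
    show "emb A L \<subseteq> {e \<in> M. e \<subseteq> {..<c}}" using subA Asub unfolding Mdef by blast
  qed
  show outer: "{e \<in> M. e \<subseteq> {c..}} = emb B V"
  proof
    show "{e \<in> M. e \<subseteq> {c..}} \<subseteq> emb B V"
    proof
      fix e assume e: "e \<in> {e \<in> M. e \<subseteq> {c..}}"
      show "e \<in> emb B V"
      proof (rule ccontr)
        assume "e \<notin> emb B V"
        then consider "e \<in> C" | "e \<in> emb A L" using e unfolding Mdef by blast
        then show False
        proof cases
          case 1
          then obtain x y where "x \<in> X" "e = {x, y}" using Cedge by blast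
          then show False using e Xsub by auto
        next
          case 2
          then have ec: "e \<subseteq> {..<c}" using subA Asub by blast
          have "e \<noteq> {}" using e ne by simp
          then obtain z where z: "z \<in> e" by blast
          have "z \<in> {..<c}" using ec z by blast
          moreover have "z \<in> {c..}" using e z by blast
          ultimately show False by simp
        qed
      qed
    qed
    show "emb B V \<subseteq> {e \<in> M. e \<subseteq> {c..}}" using subB Bsub unfolding Mdef by blast
  qed
  show "{e \<in> M. \<not> e \<subseteq> {..<c} \<and> \<not> e \<subseteq> {c..}} = C"
  proof
    show "{e \<in> M. \<not> e \<subseteq> {..<c} \<and> \<not> e \<subseteq> {c..}} \<subseteq> C"
      using inner outer unfolding Mdef by blast
    show "C \<subseteq> {e \<in> M. \<not> e \<subseteq> {..<c} \<and> \<not> e \<subseteq> {c..}}"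
    proof
      fix e assume "e \<in> C"
      then obtain x y where "x \<in> X" "y \<in> Y" "e = {x, y}" using Cedge by blast
      then show "e \<in> {e \<in> M. \<not> e \<subseteq> {..<c} \<and> \<not> e \<subseteq> {c..}}"
        using \<open>e \<in> C\<close> Xsub Ysub unfolding Mdef by auto
    qed
  qed
  show "card {e \<in> M. e \<subseteq> {..<c}} = l" using inner card_emb[OF fA uL] mL(2) by simp
  have eA: "enum A ` {..<card A} = A" by (rule enum_image[OF fA])
  have eB: "enum B ` {..<card B} = B" by (rule enum_image[OF fB])
  have tA: "emb_into \<sigma> L W \<longleftrightarrow> emb_into \<sigma> M (enum A ` W)" if "W \<subseteq> {..<card A}" for W
    by (rule emb_transport[OF fA Asub inner uL that])
  have tB: "emb_into \<tau> V W \<longleftrightarrow> emb_into \<tau> M (enum B ` W)" if "W \<subseteq> {..<card B}" for W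
    by (rule emb_transport[OF fB Bsub outer uV that])
  have e1: "emb_into \<sigma> M {..<c}"
  proof -
    have "emb_into \<sigma> L {..<card A}" using mL(3) cA mL(2) unfolding contains_emb by simp
    then have "emb_into \<sigma> M A" using tA[of "{..<card A}"] eA by simp
    then show ?thesis using Asub emb_into_mono by blast
  qed
  have ne1: "\<not> emb_into \<sigma> M {..<c - 1}"
  proof
    assume a: "emb_into \<sigma> M {..<c - 1}"
    have "emb_into \<sigma> M (A - {c - 1})"
    proof (rule emb_into_restrict[OF ps a])
      fix e assume "e \<in> M" "e \<subseteq> {..<c - 1}"
      moreover have "e \<subseteq> {..<c}" using \<open>e \<subseteq> {..<c - 1}\<close> by auto
      ultimately have "e \<in> emb A L" using inner by blast
      then show "e \<subseteq> A - {c - 1}" using subA \<open>e \<subseteq> {..<c - 1}\<close> by auto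
    qed
    then have "emb_into \<sigma> M (enum A ` {..<card A - 1})" using enum_max[OF fA Asub c1A] by simp
    then have "emb_into \<sigma> L {..<card A - 1}" using tA[of "{..<card A - 1}"] by auto
    then have "contains (delete_rightmost L) \<sigma>" using dr_lemma[OF mL(1,2) l1 ps] cA by simp
    moreover have "L \<noteq> {}" using mL(2) l1 by auto
    ultimately show False using mL(4) by blast
  qed
  show cutM: "cut \<sigma> M = c" using cut_eq[OF e1 ne1] l1 cdef by simp
  have "contains M \<sigma>" unfolding contains_emb mM(2)
    using e1 emb_into_mono[of \<sigma> M "{..<c}" "{..<2 * n}"] cdef lkn by simp
  moreover have "\<not> contains M (juxt \<sigma> \<tau>)"
  proof
    assume "contains M (juxt \<sigma> \<tau>)"
    then obtain p0 where p0: "p0 < 2 * card M" "emb_into \<sigma> M {..<Suc p0}" "emb_into \<tau> M {p0<..}"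
      using juxt_split[OF ps pt s1] by blast
    have "\<not> Suc p0 \<le> c - 1" using ne1 p0(2) emb_into_mono[of \<sigma> M "{..<Suc p0}" "{..<c - 1}"] by auto
    then have "{p0<..} \<subseteq> {c..}" using l1 cdef by auto
    then have "emb_into \<tau> M {c..}" using p0(3) emb_into_mono by blast
    then have "emb_into \<tau> M B"
    proof (rule emb_into_restrict[OF pt])
      fix e assume "e \<in> M" "e \<subseteq> {c..}"
      then have "e \<in> emb B V" using outer by auto
      then show "e \<subseteq> B" using subB by blast
    qed
    then have "emb_into \<tau> V {..<card B}" using tB[of "{..<card B}"] eB by simp
    then have "contains V \<tau>" unfolding contains_emb using cB mV(2) by simp
    then show False using mV(3) by simp
  qed
  ultimately show "M \<in> Tset \<sigma> \<tau> n" unfolding Tset_def using mM by simp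
qed



lemma last_edge:
  assumes ps: "pm \<sigma> {..<2 * card \<sigma>}" and e1: "emb_into \<sigma> M {..<c}" and ne1: "\<not> emb_into \<sigma> M {..<c - 1}"
  shows "\<exists>e\<in>M. c - 1 \<in> e \<and> e \<subseteq> {..<c}"
proof -
  obtain g where g: "strict_mono_on {..<2 * card \<sigma>} g" "g ` {..<2 * card \<sigma>} \<subseteq> {..<c}"
     "\<forall>p<2 * card \<sigma>. \<forall>q<2 * card \<sigma>. {g p, g q} \<in> M \<longleftrightarrow> {p, q} \<in> \<sigma>"
    using e1 unfolding emb_into_def by blast
  have "\<exists>p<2 * card \<sigma>. g p = c - 1"
  proof (rule ccontr)
    assume "\<not> (\<exists>p<2 * card \<sigma>. g p = c - 1)"
    have "g ` {..<2 * card \<sigma>} \<subseteq> {..<c - 1}"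
    proof
      fix x assume "x \<in> g ` {..<2 * card \<sigma>}"
      then obtain p where p: "p < 2 * card \<sigma>" "x = g p" by auto
      then have "x < c" "x \<noteq> c - 1" using g(2) \<open>\<not> (\<exists>p<2 * card \<sigma>. g p = c - 1)\<close> by auto
      then show "x \<in> {..<c - 1}" by simp
    qed
    then have "emb_into \<sigma> M {..<c - 1}" using g(1,3) unfolding emb_into_def by (intro exI[of _ g]) simp
    then show False using ne1 by simp
  qed
  then obtain p where p: "p < 2 * card \<sigma>" "g p = c - 1" by blast
  have "p \<in> {..<2 * card \<sigma>}" using p by simp
  then obtain q where q: "{p, q} \<in> \<sigma>" "q \<in> {..<2 * card \<sigma>}" using pm_partner[OF ps] by blast
  have "{g p, g q} \<in> M" using g(3) p(1) q by simp
  moreover have "{g p, g q} \<subseteq> {..<c}" using g(2) p(1) q(2) by auto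
  moreover have "c - 1 \<in> {g p, g q}" using p(2) by simp
  ultimately show ?thesis by (intro bexI[of _ "{g p, g q}"]) simp_all
qed

lemma decomp:
  assumes ms: "is_matching \<sigma>" and s1: "card \<sigma> \<ge> 1" and mt: "is_matching \<tau>"
    and MT: "M \<in> Tset \<sigma> \<tau> n"
  shows "\<exists>l k X Y C L V. l + k \<le> n \<and> X \<subseteq> {..<2 * l + k - 1} \<and> card X = k
      \<and> Y \<subseteq> {2 * l + k..<2 * n} \<and> card Y = k \<and> cr X Y C \<and> L \<in> mu l \<sigma>
      \<and> V \<in> avoiders (n - l - k) {\<tau>}
      \<and> M = emb ({..<2 * l + k} - X) L \<union> C \<union> emb ({2 * l + k..<2 * n} - Y) V"
proof -
  have ps: "pm \<sigma> {..<2 * card \<sigma>}" using ms is_matching_pm by blast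
  have pt: "pm \<tau> {..<2 * card \<tau>}" using mt is_matching_pm by blast
  have mM: "is_matching M" "card M = n" "contains M \<sigma>" "\<not> contains M (juxt \<sigma> \<tau>)"
    using MT unfolding Tset_def by auto
  have pM: "pm M {..<2 * n}" using mM(1,2) is_matching_pm by simp
  have fM: "finite M" using mM(1) is_matching_pm by simp
  define c where "c = cut \<sigma> M"
  have eM: "emb_into \<sigma> M {..<2 * n}" using mM(3) mM(2) unfolding contains_emb by simp
  have e1: "emb_into \<sigma> M {..<c}" unfolding c_def cut_def by (rule LeastI[of _ "2 * n"]) (rule eM)
  have c2n: "c \<le> 2 * n" unfolding c_def cut_def by (rule Least_le) (rule eM)
  have c1: "c \<ge> 1" using emb_nonempty[OF e1 s1] by (cases c) auto
  have ne1: "\<not> emb_into \<sigma> M {..<c - 1}"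
  proof -
    have "c - 1 < c" using c1 by simp
    then show ?thesis unfolding c_def cut_def by (rule not_less_Least)
  qed
  define I where "I = {e \<in> M. e \<subseteq> {..<c}}"
  define Ou where "Ou = {e \<in> M. e \<subseteq> {c..}}"
  define C where "C = {e \<in> M. \<not> e \<subseteq> {..<c} \<and> \<not> e \<subseteq> {c..}}"
  define A where "A = \<Union>I"
  define B where "B = \<Union>Ou"
  define X where "X = \<Union>C \<inter> {..<c}"
  define Y where "Y = \<Union>C \<inter> {c..}"
  have MU: "M = I \<union> C \<union> Ou" unfolding I_def C_def Ou_def by blast
  have IC: "I \<inter> C = {}" "I \<inter> Ou = {}" "C \<inter> Ou = {}"
  proof -
    show "I \<inter> C = {}" "C \<inter> Ou = {}" unfolding I_def C_def Ou_def by auto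
    have "e \<noteq> {}" if "e \<in> M" for e
    proof -
      have "card e = 2" using pM that unfolding pm_def by simp
      then show ?thesis by auto
    qed
    show "I \<inter> Ou = {}"
    proof (rule ccontr)
      assume "I \<inter> Ou \<noteq> {}"
      then obtain e where "e \<in> I" "e \<in> Ou" by blast
      then have e: "e \<in> M" "e \<subseteq> {..<c}" "e \<subseteq> {c..}" unfolding I_def Ou_def by simp_all
      then have "e \<noteq> {}" using \<open>\<And>e. e \<in> M \<Longrightarrow> e \<noteq> {}\<close> by simp
      then obtain z where z: "z \<in> e" by blast
      have "z \<in> {..<c}" using e(2) z by blast
      moreover have "z \<in> {c..}" using e(3) z by blast
      ultimately show False by simp
    qed
  qed
  have "I \<subseteq> M" "Ou \<subseteq> M" "C \<subseteq> M" unfolding I_def Ou_def C_def by simp_all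
  then have pI: "pm I A" and pO: "pm Ou B" and pC0: "pm C (\<Union>C)"
    unfolding A_def B_def using pm_sub[OF pM] by simp_all
  have UM: "\<Union>M = {..<2 * n}" using pM unfolding pm_def by simp
  have Asub: "A \<subseteq> {..<c}" unfolding A_def I_def by (rule Union_least) simp
  have Bsub: "B \<subseteq> {c..}" unfolding B_def Ou_def by (rule Union_least) simp
  have Ceq: "\<forall>e\<in>C. \<exists>x\<in>X. \<exists>y\<in>Y. e = {x, y}"
  proof
    fix e assume eC: "e \<in> C"
    then have "e \<in> M" unfolding C_def by simp
    then obtain a b where ab: "e = {a, b}" "a \<noteq> b" "a \<in> {..<2 * n}" "b \<in> {..<2 * n}"
      by (rule pm_edge[OF pM])
    have n1: "\<not> e \<subseteq> {..<c}" "\<not> e \<subseteq> {c..}" using eC unfolding C_def by simp_all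
    then have n2: "\<not> (a < c \<and> b < c)" "\<not> (c \<le> a \<and> c \<le> b)" unfolding ab(1) by simp_all
    show "\<exists>x\<in>X. \<exists>y\<in>Y. e = {x, y}"
    proof (cases "a < c")
      case True
      then have "b \<ge> c" using n2 by simp
      then have "a \<in> X" "b \<in> Y" using True eC ab(1) unfolding X_def Y_def by auto
      then show ?thesis using ab(1) by blast
    next
      case False
      then have "b < c" using n2 by simp
      then have "b \<in> X" "a \<in> Y" using False eC ab(1) unfolding X_def Y_def by auto
      moreover have "e = {b, a}" using ab(1) by auto
      ultimately show ?thesis by blast
    qed
  qed
  have XYU: "X \<union> Y = \<Union>C" unfolding X_def Y_def by auto
  have crC: "cr X Y C" unfolding cr_def using pC0 XYU Ceq by simp
  have Xsub: "X \<subseteq> {..<c}" unfolding X_def by auto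
  have Ysub: "Y \<subseteq> {c..}" unfolding Y_def by auto
  have XYlt: "\<forall>x\<in>X. \<forall>y\<in>Y. x < y"
  proof (intro ballI)
    fix x y assume "x \<in> X" "y \<in> Y"
    then have "x < c" "c \<le> y" using Xsub Ysub by auto
    then show "x < y" by simp
  qed
  have "\<Union>M = A \<union> \<Union>C \<union> B" using MU unfolding A_def B_def by simp
  moreover have "A \<union> X \<union> Y \<union> B = A \<union> (X \<union> Y) \<union> B" by (simp add: Un_assoc)
  ultimately have U4: "A \<union> X \<union> Y \<union> B = {..<2 * n}" using UM XYU by simp
  have "X \<subseteq> {..<2 * n}" "Y \<subseteq> {..<2 * n}" using U4 by auto
  then have fX: "finite X" "finite Y" using finite_subset by auto
  have cXY: "card X = card C" "card Y = card C" using cr_cards[OF crC fX XYlt] by auto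
  have disjI: "x \<notin> A" if xC: "x \<in> \<Union>C" for x
  proof
    assume "x \<in> A"
    then obtain e where e: "e \<in> I" "x \<in> e" unfolding A_def by blast
    obtain e' where e': "e' \<in> C" "x \<in> e'" using xC by blast
    have "e \<in> M" "e' \<in> M" using e e' unfolding I_def C_def by auto
    then have "e = e'" using pm_unique[OF pM] e e' by blast
    then show False using IC(1) e e' by blast
  qed
  have disjO: "x \<notin> B" if xC: "x \<in> \<Union>C" for x
  proof
    assume "x \<in> B"
    then obtain e where e: "e \<in> Ou" "x \<in> e" unfolding B_def by blast
    obtain e' where e': "e' \<in> C" "x \<in> e'" using xC by blast
    have "e \<in> M" "e' \<in> M" using e e' unfolding Ou_def C_def by auto
    then have "e = e'" using pm_unique[OF pM] e e' by blast
    then show False using IC(3) e e' by blast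
  qed
  have AX: "A \<inter> X = {}" using disjI unfolding X_def by blast
  have YB: "Y \<inter> B = {}" using disjO unfolding Y_def by blast
  have Aeq: "A = {..<c} - X"
  proof
    show "A \<subseteq> {..<c} - X" using Asub AX by blast
    show "{..<c} - X \<subseteq> A"
    proof
      fix z assume z: "z \<in> {..<c} - X"
      then have "z \<in> {..<2 * n}" using c2n by auto
      then have zU: "z \<in> A \<union> X \<union> Y \<union> B" using U4 by simp
      have zc: "z < c" "z \<notin> X" using z by auto
      have "z \<notin> Y"
      proof
        assume "z \<in> Y" then have "z \<in> {c..}" using Ysub by blast
        then show False using zc by simp
      qed
      moreover have "z \<notin> B"
      proof
        assume "z \<in> B" then have "z \<in> {c..}" using Bsub by blast
        then show False using zc by simp
      qed
      ultimately show "z \<in> A" using zU zc by blast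
    qed
  qed
  have Beq: "B = {c..<2 * n} - Y"
  proof
    show "B \<subseteq> {c..<2 * n} - Y"
    proof
      fix z assume z: "z \<in> B"
      then have "z \<in> {c..}" "z \<in> {..<2 * n}" "z \<notin> Y" using Bsub U4 YB by auto
      then show "z \<in> {c..<2 * n} - Y" by simp
    qed
    show "{c..<2 * n} - Y \<subseteq> B"
    proof
      fix z assume z: "z \<in> {c..<2 * n} - Y"
      then have zU: "z \<in> A \<union> X \<union> Y \<union> B" using U4 by auto
      have zc: "c \<le> z" "z \<notin> Y" using z by auto
      have "z \<notin> X"
      proof
        assume "z \<in> X" then have "z \<in> {..<c}" using Xsub by blast
        then show False using zc by simp
      qed
      moreover have "z \<notin> A"
      proof
        assume "z \<in> A" then have "z \<in> {..<c}" using Asub by blast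
        then show False using zc by simp
      qed
      ultimately show "z \<in> B" using zU zc by blast
    qed
  qed
  have fA: "finite A" "finite B" unfolding Aeq Beq by auto
  define l where "l = card I"
  define k where "k = card C"
  have cA: "card A = 2 * l" using pm_card(2)[OF pI fA(1)] unfolding l_def .
  have cB: "card B = 2 * card Ou" using pm_card(2)[OF pO fA(2)] .
  have "{..<c} = A \<union> X" using Aeq Xsub by auto
  then have "card {..<c} = card A + card X" using card_Un_disjoint[OF fA(1) fX(1) AX] by simp
  then have cdef: "c = 2 * l + k" using cA cXY unfolding k_def by simp
  have fI: "finite I" "finite C" "finite Ou" using fM unfolding I_def C_def Ou_def by auto
  have "card (I \<union> C) = card I + card C" using card_Un_disjoint[OF fI(1) fI(2) IC(1)] .
  moreover have "(I \<union> C) \<inter> Ou = {}" using IC by blast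
  ultimately have "card M = card I + card C + card Ou" unfolding MU
    using card_Un_disjoint[of "I \<union> C" Ou] fI by simp
  then have cO: "card Ou = n - l - k" and lkn: "l + k \<le> n" using mM(2) unfolding l_def k_def by auto
  obtain e where e: "e \<in> M" "c - 1 \<in> e" "e \<subseteq> {..<c}" using last_edge[OF ps e1 ne1] by blast
  have c1A: "c - 1 \<in> A" using e unfolding A_def I_def by blast
  have Xsub': "X \<subseteq> {..<2 * l + k - 1}"
  proof
    fix x assume "x \<in> X"
    then have "x < c" "x \<noteq> c - 1" using Xsub c1A AX by auto
    then show "x \<in> {..<2 * l + k - 1}" using cdef by simp
  qed
  have Ysub': "Y \<subseteq> {2 * l + k..<2 * n}" using Beq Ysub U4 cdef by auto
  define L where "L = std A I"
  define V where "V = std B Ou"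
  have uI: "\<Union>I \<subseteq> A" unfolding A_def by simp
  have uO: "\<Union>Ou \<subseteq> B" unfolding B_def by simp
  have pL: "pm L {..<card A}" unfolding L_def by (rule pm_std[OF fA(1) pI])
  have pV: "pm V {..<card B}" unfolding V_def by (rule pm_std[OF fA(2) pO])
  have cL: "card L = l" unfolding L_def l_def by (rule card_std[OF fA(1) uI])
  have cV: "card V = card Ou" unfolding V_def by (rule card_std[OF fA(2) uO])
  have embL: "emb A L = I" unfolding L_def by (rule emb_std[OF fA(1) uI])
  have embV: "emb B V = Ou" unfolding V_def by (rule emb_std[OF fA(2) uO])
  have mL: "is_matching L" using pm_is_matching(1)[of L l] pL cA by simp
  have mV: "is_matching V" using pm_is_matching(1)[of V "card Ou"] pV cB by simp
  have uL: "\<Union>L \<subseteq> {..<card A}" using pL unfolding pm_def by simp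
  have uV: "\<Union>V \<subseteq> {..<card B}" using pV unfolding pm_def by simp
  have innerM: "{e \<in> M. e \<subseteq> {..<c}} = emb A L" using embL unfolding I_def by simp
  have outerM: "{e \<in> M. e \<subseteq> {c..}} = emb B V" using embV unfolding Ou_def by simp
  have tA: "emb_into \<sigma> L W \<longleftrightarrow> emb_into \<sigma> M (enum A ` W)" if "W \<subseteq> {..<card A}" for W
    by (rule emb_transport[OF fA(1) Asub innerM uL that])
  have tB: "emb_into \<tau> V W \<longleftrightarrow> emb_into \<tau> M (enum B ` W)" if "W \<subseteq> {..<card B}" for W
    by (rule emb_transport[OF fA(2) Bsub outerM uV that])
  have "A \<noteq> {}" using c1A by blast
  then have "card A \<noteq> 0" using fA(1) by simp
  then have l1: "l \<ge> 1" using cA by simp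
  have "emb_into \<sigma> M A"
  proof (rule emb_into_restrict[OF ps e1])
    fix e assume "e \<in> M" "e \<subseteq> {..<c}"
    then show "e \<subseteq> A" unfolding A_def I_def by blast
  qed
  then have "emb_into \<sigma> L {..<card A}" using tA[of "{..<card A}"] enum_image[OF fA(1)] by simp
  then have cLs: "contains L \<sigma>" unfolding contains_emb using cL cA by simp
  have "\<not> contains (delete_rightmost L) \<sigma>"
  proof
    assume "contains (delete_rightmost L) \<sigma>"
    then have "emb_into \<sigma> L {..<2 * l - 1}" using dr_lemma[OF mL cL l1 ps] by simp
    then have "emb_into \<sigma> M (enum A ` {..<card A - 1})" using tA[of "{..<card A - 1}"] cA by auto
    then have "emb_into \<sigma> M (A - {c - 1})" using enum_max[OF fA(1) Asub c1A] by simp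
    moreover have "A - {c - 1} \<subseteq> {..<c - 1}" using Asub by auto
    ultimately have "emb_into \<sigma> M {..<c - 1}" by (rule emb_into_mono)
    then show False using ne1 by simp
  qed
  then have Lmu: "L \<in> mu l \<sigma>" unfolding mu_def minimally_contains_def using mL cL cLs by simp
  have "\<not> contains V \<tau>"
  proof
    assume "contains V \<tau>"
    then have "emb_into \<tau> V {..<card B}" unfolding contains_emb using cV cB by simp
    then have "emb_into \<tau> M B" using tB[of "{..<card B}"] enum_image[OF fA(2)] by simp
    then have "emb_into \<tau> M {c..<2 * card M}" using Beq mM(2) by (rule_tac emb_into_mono) auto
    then have "contains M (juxt \<sigma> \<tau>)" using juxt_combine[OF ps pt pM e1] c2n mM(2) by simp
    then show False using mM(4) by simp
  qed
  then have Vav: "V \<in> avoiders (n - l - k) {\<tau>}" unfolding avoiders_def using mV cV cO by simp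
  have "M = emb ({..<2 * l + k} - X) L \<union> C \<union> emb ({2 * l + k..<2 * n} - Y) V"
    using MU embL embV Aeq Beq cdef by simp
  then show ?thesis using lkn Xsub' cXY Ysub' crC Lmu Vav unfolding k_def by blast
qed



definition Dset :: "nat set set \<Rightarrow> nat set set \<Rightarrow> nat \<Rightarrow> nat \<Rightarrow> nat
    \<Rightarrow> (nat set \<times> nat set \<times> nat set set \<times> nat set set \<times> nat set set) set" where
  "Dset \<sigma> \<tau> n l k = Sigma {X. X \<subseteq> {..<2 * l + k - 1} \<and> card X = k}
     (\<lambda>X. Sigma {Y. Y \<subseteq> {2 * l + k..<2 * n} \<and> card Y = k}
       (\<lambda>Y. {C. cr X Y C} \<times> (mu l \<sigma> \<times> avoiders (n - l - k) {\<tau>})))"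

definition Psi :: "nat \<Rightarrow> nat \<Rightarrow> nat \<Rightarrow> nat set \<times> nat set \<times> nat set set \<times> nat set set \<times> nat set set
    \<Rightarrow> nat set set" where
  "Psi n l k = (\<lambda>(X, Y, C, L, V). emb ({..<2 * l + k} - X) L \<union> C \<union> emb ({2 * l + k..<2 * n} - Y) V)"

lemma Dset_mem: "(X, Y, C, L, V) \<in> Dset \<sigma> \<tau> n l k \<longleftrightarrow>
    X \<subseteq> {..<2 * l + k - 1} \<and> card X = k \<and> Y \<subseteq> {2 * l + k..<2 * n} \<and> card Y = k \<and> cr X Y C
    \<and> L \<in> mu l \<sigma> \<and> V \<in> avoiders (n - l - k) {\<tau>}"
  unfolding Dset_def by auto

lemma psi_in:
  assumes ms: "is_matching \<sigma>" and s1: "card \<sigma> \<ge> 1" and mt: "is_matching \<tau>" and lkn: "l + k \<le> n"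
    and x: "x \<in> Dset \<sigma> \<tau> n l k"
  shows "Psi n l k x \<in> Tlk \<sigma> \<tau> n l k"
proof -
  obtain X Y C L V where xe: "x = (X, Y, C, L, V)" by (cases x) auto
  have D: "X \<subseteq> {..<2 * l + k - 1}" "card X = k" "Y \<subseteq> {2 * l + k..<2 * n}" "card Y = k" "cr X Y C"
    "L \<in> mu l \<sigma>" "V \<in> avoiders (n - l - k) {\<tau>}" using x unfolding xe Dset_mem by auto
  define M where "M = Psi n l k x"
  have Mdef: "M = emb ({..<2 * l + k} - X) L \<union> C \<union> emb ({2 * l + k..<2 * n} - Y) V"
    unfolding M_def xe Psi_def by simp
  note P = psi_props[OF ms s1 mt lkn D refl refl refl Mdef]
  show ?thesis unfolding M_def[symmetric] Tlk_def using P by simp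
qed

lemma psi_inj:
  assumes ms: "is_matching \<sigma>" and s1: "card \<sigma> \<ge> 1" and mt: "is_matching \<tau>" and lkn: "l + k \<le> n"
  shows "inj_on (Psi n l k) (Dset \<sigma> \<tau> n l k)"
proof (rule inj_onI)
  fix x x' assume x: "x \<in> Dset \<sigma> \<tau> n l k" and x': "x' \<in> Dset \<sigma> \<tau> n l k"
    and eq: "Psi n l k x = Psi n l k x'"
  obtain X Y C L V where xe: "x = (X, Y, C, L, V)" by (cases x) auto
  obtain X' Y' C' L' V' where xe': "x' = (X', Y', C', L', V')" by (cases x') auto
  define c where "c = 2 * l + k"
  have D: "X \<subseteq> {..<2 * l + k - 1}" "card X = k" "Y \<subseteq> {2 * l + k..<2 * n}" "card Y = k" "cr X Y C"
    "L \<in> mu l \<sigma>" "V \<in> avoiders (n - l - k) {\<tau>}" using x unfolding xe Dset_mem by auto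
  have D': "X' \<subseteq> {..<2 * l + k - 1}" "card X' = k" "Y' \<subseteq> {2 * l + k..<2 * n}" "card Y' = k" "cr X' Y' C'"
    "L' \<in> mu l \<sigma>" "V' \<in> avoiders (n - l - k) {\<tau>}" using x' unfolding xe' Dset_mem by auto
  define M where "M = Psi n l k x"
  have Mdef: "M = emb ({..<2 * l + k} - X) L \<union> C \<union> emb ({2 * l + k..<2 * n} - Y) V"
    unfolding M_def xe Psi_def by simp
  have "M = Psi n l k x'" using eq M_def by simp
  then have Mdef': "M = emb ({..<2 * l + k} - X') L' \<union> C' \<union> emb ({2 * l + k..<2 * n} - Y') V'"
    unfolding xe' Psi_def by simp
  note P = psi_props[OF ms s1 mt lkn D refl refl refl Mdef]
  note P' = psi_props[OF ms s1 mt lkn D' refl refl refl Mdef']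
  have CC: "C = C'" using P(5) P'(5) by simp
  have XYeq: "X = \<Union>C \<inter> {..<c}" "Y = \<Union>C \<inter> {c..}" if "cr X Y C" "X \<subseteq> {..<2 * l + k - 1}"
    "Y \<subseteq> {2 * l + k..<2 * n}" for X Y C
  proof -
    have "\<Union>C = X \<union> Y" using that(1) unfolding cr_def pm_def by simp
    moreover have "X \<subseteq> {..<c}" "Y \<subseteq> {c..}" using that(2,3) unfolding c_def by auto
    ultimately show "X = \<Union>C \<inter> {..<c}" "Y = \<Union>C \<inter> {c..}" by auto
  qed
  have XX: "X = X'" "Y = Y'" using XYeq[OF D(5,1,3)] XYeq[OF D'(5,1,3)] CC by simp_all
  have uL: "\<Union>L \<subseteq> {..<card ({..<2 * l + k} - X)}" "\<Union>L' \<subseteq> {..<card ({..<2 * l + k} - X)}"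
    using D(6) D'(6) P(6) unfolding mu_def is_matching_def by auto
  have uV: "\<Union>V \<subseteq> {..<card ({2 * l + k..<2 * n} - Y)}" "\<Union>V' \<subseteq> {..<card ({2 * l + k..<2 * n} - Y)}"
    using D(7) D'(7) P(7) unfolding avoiders_def is_matching_def by auto
  have "emb ({..<2 * l + k} - X) L = emb ({..<2 * l + k} - X) L'" using P(3) P'(3) XX by simp
  then have LL: "L = L'" using std_emb[OF _ uL(1)] std_emb[OF _ uL(2)] by (metis finite_Diff finite_lessThan)
  have "emb ({2 * l + k..<2 * n} - Y) V = emb ({2 * l + k..<2 * n} - Y) V'" using P(4) P'(4) XX by simp
  then have VV: "V = V'" using std_emb[OF _ uV(1)] std_emb[OF _ uV(2)] by (metis finite_Diff finite_atLeastLessThan)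
  show "x = x'" unfolding xe xe' using XX CC LL VV by simp
qed

lemma Tlk_eq:
  assumes ms: "is_matching \<sigma>" and s1: "card \<sigma> \<ge> 1" and mt: "is_matching \<tau>" and lkn: "l + k \<le> n"
  shows "Tlk \<sigma> \<tau> n l k = Psi n l k ` Dset \<sigma> \<tau> n l k"
proof
  show "Psi n l k ` Dset \<sigma> \<tau> n l k \<subseteq> Tlk \<sigma> \<tau> n l k" using psi_in[OF assms] by blast
  show "Tlk \<sigma> \<tau> n l k \<subseteq> Psi n l k ` Dset \<sigma> \<tau> n l k"
  proof
    fix M assume MT: "M \<in> Tlk \<sigma> \<tau> n l k"
    then have "M \<in> Tset \<sigma> \<tau> n" unfolding Tlk_def by simp
    then obtain l' k' X Y C L V where dec: "l' + k' \<le> n" "X \<subseteq> {..<2 * l' + k' - 1}" "card X = k'"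
      "Y \<subseteq> {2 * l' + k'..<2 * n}" "card Y = k'" "cr X Y C" "L \<in> mu l' \<sigma>"
      "V \<in> avoiders (n - l' - k') {\<tau>}"
      "M = emb ({..<2 * l' + k'} - X) L \<union> C \<union> emb ({2 * l' + k'..<2 * n} - Y) V"
      using decomp[OF ms s1 mt] by blast
    have xD: "(X, Y, C, L, V) \<in> Dset \<sigma> \<tau> n l' k'" unfolding Dset_mem using dec by simp
    have MP: "M = Psi n l' k' (X, Y, C, L, V)" unfolding Psi_def using dec(9) by simp
    have "M \<in> Tlk \<sigma> \<tau> n l' k'" using psi_in[OF ms s1 mt dec(1) xD] MP by simp
    then have "l' = l" "k' = k" using MT unfolding Tlk_def by auto
    then show "M \<in> Psi n l k ` Dset \<sigma> \<tau> n l k" using MP xD by blast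
  qed
qed

lemma card_Dset:
  "card (Dset \<sigma> \<tau> n l k) = ((2 * l + k - 1) choose k) * ((2 * n - 2 * l - k) choose k) * fact k
       * card (mu l \<sigma>) * card (avoiders (n - l - k) {\<tau>})"
proof -
  let ?XS = "{X. X \<subseteq> {..<2 * l + k - 1} \<and> card X = k}"
  let ?YS = "{Y. Y \<subseteq> {2 * l + k..<2 * n} \<and> card Y = k}"
  let ?P = "card (mu l \<sigma>) * card (avoiders (n - l - k) {\<tau>})"
  have fmu: "finite (mu l \<sigma>)"
    by (rule finite_subset[OF _ finite_matchings[of l]]) (auto simp: mu_def)
  have fav: "finite (avoiders (n - l - k) {\<tau>})"
    by (rule finite_subset[OF _ finite_matchings[of "n - l - k"]]) (auto simp: avoiders_def)
  have fXS: "finite ?XS" by (rule finite_subset[of _ "Pow {..<2 * l + k - 1}"]) auto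
  have fYS: "finite ?YS" by (rule finite_subset[of _ "Pow {2 * l + k..<2 * n}"]) auto
  have inner: "card ({C. cr X Y C} \<times> (mu l \<sigma> \<times> avoiders (n - l - k) {\<tau>})) = fact k * ?P"
    if "X \<in> ?XS" "Y \<in> ?YS" for X Y
  proof -
    have fX: "finite X" using that(1) finite_subset by auto
    have fY: "finite Y" using that(2) finite_subset by auto
    have "X \<inter> Y = {}"
    proof (rule ccontr)
      assume "X \<inter> Y \<noteq> {}"
      then obtain z where "z \<in> X" "z \<in> Y" by blast
      then have "z < 2 * l + k - 1" "2 * l + k \<le> z" using that by auto
      then show False by simp
    qed
    then have "card {C. cr X Y C} = fact k" using card_cr[OF fX fY] that by simp
    then show ?thesis by (simp add: card_cartesian_product)
  qed
  have "card (Dset \<sigma> \<tau> n l k) = (\<Sum>X\<in>?XS. card (Sigma ?YS (\<lambda>Y. {C. cr X Y C} \<times> (mu l \<sigma> \<times> avoiders (n - l - k) {\<tau>}))))"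
    unfolding Dset_def
  proof (rule card_SigmaI[OF fXS], rule ballI)
    fix X assume "X \<in> ?XS"
    have fX: "finite X" using \<open>X \<in> ?XS\<close> finite_subset by auto
    show "finite (Sigma ?YS (\<lambda>Y. {C. cr X Y C} \<times> (mu l \<sigma> \<times> avoiders (n - l - k) {\<tau>})))"
    proof (rule finite_SigmaI[OF fYS])
      fix Y assume "Y \<in> ?YS"
      then have "finite Y" using finite_subset by auto
      then show "finite ({C. cr X Y C} \<times> (mu l \<sigma> \<times> avoiders (n - l - k) {\<tau>}))"
        using fX fmu fav cr_finite by simp
    qed
  qed
  also have "\<dots> = (\<Sum>X\<in>?XS. \<Sum>Y\<in>?YS. fact k * ?P)"
  proof (rule sum.cong[OF refl])
    fix X assume X: "X \<in> ?XS"
    have "card (Sigma ?YS (\<lambda>Y. {C. cr X Y C} \<times> (mu l \<sigma> \<times> avoiders (n - l - k) {\<tau>})))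
        = (\<Sum>Y\<in>?YS. card ({C. cr X Y C} \<times> (mu l \<sigma> \<times> avoiders (n - l - k) {\<tau>})))"
    proof (rule card_SigmaI[OF fYS], rule ballI)
      fix Y assume "Y \<in> ?YS"
      have "finite X" "finite Y" using X \<open>Y \<in> ?YS\<close> finite_subset by auto
      then show "finite ({C. cr X Y C} \<times> (mu l \<sigma> \<times> avoiders (n - l - k) {\<tau>}))"
        using fmu fav cr_finite by simp
    qed
    also have "\<dots> = (\<Sum>Y\<in>?YS. fact k * ?P)" using inner[OF X] by simp
    finally show "card (Sigma ?YS (\<lambda>Y. {C. cr X Y C} \<times> (mu l \<sigma> \<times> avoiders (n - l - k) {\<tau>})))
        = (\<Sum>Y\<in>?YS. fact k * ?P)" .
  qed
  also have "\<dots> = card ?XS * (card ?YS * (fact k * ?P))" by simp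
  also have "card ?XS = (2 * l + k - 1) choose k" using n_subsets[of "{..<2 * l + k - 1}" k] by simp
  also have "card ?YS = (2 * n - 2 * l - k) choose k" using n_subsets[of "{2 * l + k..<2 * n}" k] by simp
  finally show ?thesis by (simp add: mult.assoc mult.left_commute)
qed



lemma contains_card_le:
  assumes "contains L \<sigma>"
  shows "card \<sigma> \<le> card L"
proof -
  obtain g where g: "strict_mono_on {..<2 * card \<sigma>} g" "g ` {..<2 * card \<sigma>} \<subseteq> {..<2 * card L}"
    using assms unfolding contains_def by blast
  have "card {..<2 * card \<sigma>} \<le> card {..<2 * card L}"
    using card_inj_on_le[OF strict_mono_on_imp_inj_on[OF g(1)] g(2)] by simp
  then show ?thesis by simp
qed

lemma contains_empty: "contains M {}"
  unfolding contains_def by simp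

lemma juxt_empty: "juxt {} \<tau> = \<tau>"
  unfolding juxt_def by simp

lemma mu_empty: "mu l {} = (if l = 0 then {{}} else {})"
proof (cases "l = 0")
  case True
  have "mu 0 {} = {{}}"
  proof
    show "mu 0 {} \<subseteq> {{}}"
    proof
      fix M assume "M \<in> mu 0 {}"
      then have "is_matching M" "card M = 0" unfolding mu_def by auto
      then have "M = {}" unfolding is_matching_def by auto
      then show "M \<in> {{}}" by simp
    qed
    show "{{}} \<subseteq> mu 0 {}"
      unfolding mu_def minimally_contains_def is_matching_def by (simp add: contains_empty)
  qed
  then show ?thesis using True by simp
next
  case False
  have "mu l {} = {}"
  proof (rule ccontr)
    assume "mu l {} \<noteq> {}"
    then obtain M where "M \<in> mu l {}" by blast
    then have "card M = l" "M \<noteq> {} \<longrightarrow> \<not> contains (delete_rightmost M) {}"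
      unfolding mu_def minimally_contains_def by auto
    moreover have "M \<noteq> {}" using calculation(1) False by auto
    ultimately show False using contains_empty by simp
  qed
  then show ?thesis using False by simp
qed

lemma main_case:
  assumes ms: "is_matching \<sigma>" and s1: "card \<sigma> \<ge> 1" and mt: "is_matching \<tau>"
  shows "card (avoiders n {juxt \<sigma> \<tau>}) =
    card (avoiders n {\<sigma>}) +
    (\<Sum>l = card \<sigma>..n. \<Sum>k = 0..n - l.
       ((2 * l + k - 1) choose k) * ((2 * n - 2 * l - k) choose k) * fact k
       * card (mu l \<sigma>) * card (avoiders (n - l - k) {\<tau>}))"
proof -
  have ps: "pm \<sigma> {..<2 * card \<sigma>}" using ms is_matching_pm by blast
  have pt: "pm \<tau> {..<2 * card \<tau>}" using mt is_matching_pm by blast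
  define F where "F l k = ((2 * l + k - 1) choose k) * ((2 * n - 2 * l - k) choose k) * fact k
       * card (mu l \<sigma>) * card (avoiders (n - l - k) {\<tau>})" for l k
  have fm: "finite {M. is_matching M \<and> card M = n}" by (rule finite_matchings)
  have split: "avoiders n {juxt \<sigma> \<tau>} = avoiders n {\<sigma>} \<union> Tset \<sigma> \<tau> n"
  proof
    show "avoiders n {juxt \<sigma> \<tau>} \<subseteq> avoiders n {\<sigma>} \<union> Tset \<sigma> \<tau> n"
      unfolding avoiders_def Tset_def by auto
    show "avoiders n {\<sigma>} \<union> Tset \<sigma> \<tau> n \<subseteq> avoiders n {juxt \<sigma> \<tau>}"
      unfolding avoiders_def Tset_def using juxt_contains_sigma[OF ps pt s1] by auto
  qed
  have disj: "avoiders n {\<sigma>} \<inter> Tset \<sigma> \<tau> n = {}" unfolding avoiders_def Tset_def by auto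
  have fa: "finite (avoiders n {\<sigma>})" by (rule finite_subset[OF _ fm]) (auto simp: avoiders_def)
  have fT: "finite (Tset \<sigma> \<tau> n)" by (rule finite_subset[OF _ fm]) (auto simp: Tset_def)
  have fTlk: "finite (Tlk \<sigma> \<tau> n l k)" for l k
    by (rule finite_subset[OF _ fT]) (auto simp: Tlk_def)
  have TU: "Tset \<sigma> \<tau> n = (\<Union>l\<in>{0..n}. \<Union>k\<in>{0..n - l}. Tlk \<sigma> \<tau> n l k)"
  proof
    show "Tset \<sigma> \<tau> n \<subseteq> (\<Union>l\<in>{0..n}. \<Union>k\<in>{0..n - l}. Tlk \<sigma> \<tau> n l k)"
    proof
      fix M assume MT: "M \<in> Tset \<sigma> \<tau> n"
      then obtain l k X Y C L V where dec: "l + k \<le> n" "X \<subseteq> {..<2 * l + k - 1}" "card X = k"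
        "Y \<subseteq> {2 * l + k..<2 * n}" "card Y = k" "cr X Y C" "L \<in> mu l \<sigma>"
        "V \<in> avoiders (n - l - k) {\<tau>}"
        "M = emb ({..<2 * l + k} - X) L \<union> C \<union> emb ({2 * l + k..<2 * n} - Y) V"
        using decomp[OF ms s1 mt] by blast
      have xD: "(X, Y, C, L, V) \<in> Dset \<sigma> \<tau> n l k" unfolding Dset_mem using dec by simp
      have "M = Psi n l k (X, Y, C, L, V)" unfolding Psi_def using dec(9) by simp
      then have "M \<in> Tlk \<sigma> \<tau> n l k" using psi_in[OF ms s1 mt dec(1) xD] by simp
      moreover have "l \<in> {0..n}" "k \<in> {0..n - l}" using dec(1) by auto
      ultimately show "M \<in> (\<Union>l\<in>{0..n}. \<Union>k\<in>{0..n - l}. Tlk \<sigma> \<tau> n l k)" by blast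
    qed
    show "(\<Union>l\<in>{0..n}. \<Union>k\<in>{0..n - l}. Tlk \<sigma> \<tau> n l k) \<subseteq> Tset \<sigma> \<tau> n"
      unfolding Tlk_def by auto
  qed
  have cardT: "card (Tset \<sigma> \<tau> n) = (\<Sum>l\<in>{0..n}. \<Sum>k\<in>{0..n - l}. card (Tlk \<sigma> \<tau> n l k))"
  proof -
    have "card (\<Union>l\<in>{0..n}. \<Union>k\<in>{0..n - l}. Tlk \<sigma> \<tau> n l k)
        = (\<Sum>l\<in>{0..n}. card (\<Union>k\<in>{0..n - l}. Tlk \<sigma> \<tau> n l k))"
    proof (rule card_UN_disjoint)
      show "finite {0..n}" by simp
      show "\<forall>l\<in>{0..n}. finite (\<Union>k\<in>{0..n - l}. Tlk \<sigma> \<tau> n l k)" using fTlk by auto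
      show "\<forall>l\<in>{0..n}. \<forall>l'\<in>{0..n}. l \<noteq> l' \<longrightarrow>
          (\<Union>k\<in>{0..n - l}. Tlk \<sigma> \<tau> n l k) \<inter> (\<Union>k\<in>{0..n - l'}. Tlk \<sigma> \<tau> n l' k) = {}"
        unfolding Tlk_def by blast
    qed
    also have "\<dots> = (\<Sum>l\<in>{0..n}. \<Sum>k\<in>{0..n - l}. card (Tlk \<sigma> \<tau> n l k))"
    proof (rule sum.cong[OF refl])
      fix l assume "l \<in> {0..n}"
      show "card (\<Union>k\<in>{0..n - l}. Tlk \<sigma> \<tau> n l k) = (\<Sum>k\<in>{0..n - l}. card (Tlk \<sigma> \<tau> n l k))"
      proof (rule card_UN_disjoint)
        show "finite {0..n - l}" by simp
        show "\<forall>k\<in>{0..n - l}. finite (Tlk \<sigma> \<tau> n l k)" using fTlk by auto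
        show "\<forall>k\<in>{0..n - l}. \<forall>k'\<in>{0..n - l}. k \<noteq> k' \<longrightarrow> Tlk \<sigma> \<tau> n l k \<inter> Tlk \<sigma> \<tau> n l k' = {}"
          unfolding Tlk_def by auto
      qed
    qed
    finally show ?thesis using TU by simp
  qed
  have cTlk: "card (Tlk \<sigma> \<tau> n l k) = F l k" if "l \<in> {0..n}" "k \<in> {0..n - l}" for l k
  proof -
    have lkn: "l + k \<le> n" using that by auto
    have "card (Tlk \<sigma> \<tau> n l k) = card (Psi n l k ` Dset \<sigma> \<tau> n l k)" using Tlk_eq[OF ms s1 mt lkn] by simp
    also have "\<dots> = card (Dset \<sigma> \<tau> n l k)" by (rule card_image[OF psi_inj[OF ms s1 mt lkn]])
    also have "\<dots> = F l k" unfolding F_def by (rule card_Dset)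
    finally show ?thesis .
  qed
  have "card (Tset \<sigma> \<tau> n) = (\<Sum>l\<in>{0..n}. \<Sum>k\<in>{0..n - l}. F l k)"
    unfolding cardT using cTlk by simp
  also have "\<dots> = (\<Sum>l\<in>{card \<sigma>..n}. \<Sum>k\<in>{0..n - l}. F l k)"
  proof (rule sum.mono_neutral_right)
    show "finite {0..n}" by simp
    show "{card \<sigma>..n} \<subseteq> {0..n}" by auto
    show "\<forall>l\<in>{0..n} - {card \<sigma>..n}. (\<Sum>k\<in>{0..n - l}. F l k) = 0"
    proof
      fix l assume "l \<in> {0..n} - {card \<sigma>..n}"
      then have "l < card \<sigma>" by auto
      then have "mu l \<sigma> = {}" using contains_card_le unfolding mu_def minimally_contains_def by fastforce
      then show "(\<Sum>k\<in>{0..n - l}. F l k) = 0" unfolding F_def by simp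
    qed
  qed
  finally have "card (Tset \<sigma> \<tau> n) = (\<Sum>l\<in>{card \<sigma>..n}. \<Sum>k\<in>{0..n - l}. F l k)" .
  moreover have "card (avoiders n {juxt \<sigma> \<tau>}) = card (avoiders n {\<sigma>}) + card (Tset \<sigma> \<tau> n)"
    unfolding split by (rule card_Un_disjoint[OF fa fT disj])
  ultimately show ?thesis unfolding F_def by simp
qed

lemma empty_case:
  assumes mt: "is_matching \<tau>"
  shows "card (avoiders n {juxt {} \<tau>}) =
    card (avoiders n {{}}) +
    (\<Sum>l = card ({}::nat set set)..n. \<Sum>k = 0..n - l.
       ((2 * l + k - 1) choose k) * ((2 * n - 2 * l - k) choose k) * fact k
       * card (mu l {}) * card (avoiders (n - l - k) {\<tau>}))"
proof -
  define G where "G l = (\<Sum>k = 0..n - l.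
       ((2 * l + k - 1) choose k) * ((2 * n - 2 * l - k) choose k) * fact k
       * card (mu l ({}::nat set set)) * card (avoiders (n - l - k) {\<tau>}))" for l
  have av0: "avoiders n {{}} = {}" unfolding avoiders_def using contains_empty by simp
  have "(\<Sum>l = 0..n. G l) = (\<Sum>l\<in>{0}. G l)"
  proof (rule sum.mono_neutral_right)
    show "\<forall>l\<in>{0..n} - {0}. G l = 0" unfolding G_def by (auto simp: mu_empty)
  qed auto
  also have "\<dots> = G 0" by simp
  also have "G 0 = (\<Sum>k = 0..n. ((k - 1) choose k) * ((2 * n - k) choose k) * fact k
       * card (avoiders (n - k) {\<tau>}))" unfolding G_def by (simp add: mu_empty)
  also have "\<dots> = (\<Sum>k\<in>{0}. ((k - 1) choose k) * ((2 * n - k) choose k) * fact k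
       * card (avoiders (n - k) {\<tau>}))"
  proof (rule sum.mono_neutral_right)
    show "\<forall>k\<in>{0..n} - {0}. ((k - 1) choose k) * ((2 * n - k) choose k) * fact k
       * card (avoiders (n - k) {\<tau>}) = 0" by auto
  qed auto
  also have "\<dots> = card (avoiders n {\<tau>})" by simp
  finally show ?thesis unfolding G_def av0 juxt_empty by simp
qed

theorem proposition2:
  fixes \<sigma> \<tau> :: "nat set set" and n :: nat
  assumes "is_matching \<sigma>" and "is_matching \<tau>" and "n \<ge> card \<sigma>"
  shows "card (avoiders n {juxt \<sigma> \<tau>}) =
    card (avoiders n {\<sigma>}) +
    (\<Sum>l = card \<sigma>..n. \<Sum>k = 0..n - l.
       ((2 * l + k - 1) choose k) * ((2 * n - 2 * l - k) choose k) * fact k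
       * card (mu l \<sigma>) * card (avoiders (n - l - k) {\<tau>}))"
proof (cases "card \<sigma> = 0")
  case True
  then have "\<sigma> = {}" using assms(1) unfolding is_matching_def by simp
  then show ?thesis using empty_case[OF assms(2)] by simp
next
  case False
  then show ?thesis using main_case[OF assms(1) _ assms(2)] by simp
qed


end
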